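(* Let $\mathbb K$ be a field with $2\in\mathbb K^\times$, $A$ a unital commutative associative $\mathbb K$-algebra, $\mathfrak k$ a $\mathbb K$-Lie algebra and $\mathfrak g=A\otimes\mathfrak k$. The map $$\Phi:\mathrm{Alt}^2(\mathfrak g/\mathfrak g')_{1,3}\oplus\mathrm{Lin}(A,H^2(\mathfrak k))\to H^2(\mathfrak g),\quad(\omega,\phi)\mapsto[\omega\circ(q\times q)]+[f_\phi],$$ is a well-defined injective linear map, and its image consists of the classes of those 2-cocycles $f=f_1\circ p_1+f_2\circ p_2+f_3\circ p_3$ for which $f_1\circ p_1$ vanishes on $\mathfrak g\times\mathfrak g'$.
   Context: $\mathfrak g$ has bracket $[a\otimes x,a'\otimes x']=aa'\otimes[x,x']$, $ax=a\otimes x$, unit $\mathbf 1$; $\mathfrak k'=[\mathfrak k,\mathfrak k]$, $\mathfrak g'=A\otimes\mathfrak k'$, $\mathfrak g/\mathfrak g'\cong A\otimes(\mathfrak k/\mathfrak k')$, $q:\mathfrak g\to\mathfrak g/\mathfrak g'$ the quotient map. $H^2(\mathfrak g)$: $\mathbb K$-valued 2-cocycles on $\mathfrak g$ modulo coboundaries $(u,v)\mapsto-\ell([u,v])$; $Z^2(\mathfrak k),H^2(\mathfrak k)$ similarly for $\mathfrak k$. Alternating bilinear forms on $\mathfrak g$ are identified with linear forms on $\Lambda^2(\mathfrak g)$ via $f(u,v)=f(u\wedge v)$, where $v\wedge w=\tfrac12(v\otimes w-w\otimes v)$ and $v\vee w=\tfrac12(v\otimes w+w\otimes v)$. $I_A$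 is the kernel of multiplication $S^2(A)\to A$; $p_1(ax\wedge by)=a\wedge b\otimes x\vee y$, $p_2(ax\wedge by)=ab\otimes x\wedge y$, $p_3(ax\wedge by)=(a\vee b-ab\vee\mathbf 1)\otimes x\wedge y$ give an isomorphism $\Lambda^2(\mathfrak g)\cong(\Lambda^2(A)\otimes S^2(\mathfrak k))\oplus(A\otimes\Lambda^2(\mathfrak k))\oplus(I_A\otimes\Lambda^2(\mathfrak k))$, so each linear $f$ on $\Lambda^2(\mathfrak g)$ is uniquely $f_1\circ p_1+f_2\circ p_2+f_3\circ p_3$. $\mathrm{Alt}^2(\mathfrak g/\mathfrak g')_{1,3}$ is the space of alternating bilinear forms $\omega$ on $\mathfrak g/\mathfrak g'$ with $\omega(a\bar x,\mathbf 1\bar y)+\omega(\mathbf 1\bar x,a\bar y)=0$ for all $a\in A$, $\bar x,\bar y\in\mathfrak k/\mathfrak k'$. For $\phi\in\mathrm{Lin}(A,H^2(\mathfrak k))$, $f_\phi(ax,by):=\tilde\phi(ab)(x,y)$, where $\tilde\phi:A\to Z^2(\mathfrak k)$ is any linear lift of $\phi$. *)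

theory Defs
  imports Complex_Main
begin

definition bilin ::
  "('k::field \<Rightarrow> 'a::ab_group_add \<Rightarrow> 'a) \<Rightarrow> ('k \<Rightarrow> 'b::ab_group_add \<Rightarrow> 'b)
   \<Rightarrow> ('k \<Rightarrow> 'c::ab_group_add \<Rightarrow> 'c) \<Rightarrow> ('a \<Rightarrow> 'b \<Rightarrow> 'c) \<Rightarrow> bool" where
  "bilin s1 s2 s3 f \<longleftrightarrow>
     (\<forall>x. Vector_Spaces.linear s2 s3 (f x)) \<and> (\<forall>y. Vector_Spaces.linear s1 s3 (\<lambda>x. f x y))"

definition comm_algebra :: "('k::field \<Rightarrow> 'a::comm_ring_1 \<Rightarrow> 'a) \<Rightarrow> bool" where
  "comm_algebra sA \<longleftrightarrow> vector_space sA \<and> (\<forall>c x y. sA c (x * y) = sA c x * y)"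

definition lie_algebra :: "('k::field \<Rightarrow> 'b::ab_group_add \<Rightarrow> 'b) \<Rightarrow> ('b \<Rightarrow> 'b \<Rightarrow> 'b) \<Rightarrow> bool" where
  "lie_algebra s br \<longleftrightarrow> vector_space s \<and> bilin s s s br \<and> (\<forall>x. br x x = 0) \<and>
     (\<forall>x y z. br x (br y z) + br y (br z x) + br z (br x y) = 0)"

definition is_tensor_product ::
  "('k::field \<Rightarrow> 'a::ab_group_add \<Rightarrow> 'a) \<Rightarrow> ('k \<Rightarrow> 'b::ab_group_add \<Rightarrow> 'b)
   \<Rightarrow> ('k \<Rightarrow> 'g::ab_group_add \<Rightarrow> 'g) \<Rightarrow> ('a \<Rightarrow> 'b \<Rightarrow> 'g) \<Rightarrow> bool" where
  "is_tensor_product sA sK sG tm \<longleftrightarrow> vector_space sG \<and> bilin sA sK sG tm \<and>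
     (\<forall>\<beta>. bilin sA sK (*) \<beta> \<longrightarrow>
        (\<exists>!l. Vector_Spaces.linear sG (*) l \<and> (\<forall>a x. \<beta> a x = l (tm a x))))"

definition altform :: "('k::field \<Rightarrow> 'g::ab_group_add \<Rightarrow> 'g) \<Rightarrow> ('g \<Rightarrow> 'g \<Rightarrow> 'k) \<Rightarrow> bool" where
  "altform s f \<longleftrightarrow> bilin s s (*) f \<and> (\<forall>u. f u u = 0)"

definition Z2 :: "('k::field \<Rightarrow> 'g::ab_group_add \<Rightarrow> 'g) \<Rightarrow> ('g \<Rightarrow> 'g \<Rightarrow> 'g) \<Rightarrow> ('g \<Rightarrow> 'g \<Rightarrow> 'k) set" where
  "Z2 s br = {f. altform s f \<and> (\<forall>u v w. f (br u v) w + f (br v w) u + f (br w u) v = 0)}"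

definition B2 :: "('k::field \<Rightarrow> 'g::ab_group_add \<Rightarrow> 'g) \<Rightarrow> ('g \<Rightarrow> 'g \<Rightarrow> 'g) \<Rightarrow> ('g \<Rightarrow> 'g \<Rightarrow> 'k) set" where
  "B2 s br = {f. \<exists>l. Vector_Spaces.linear s (*) l \<and> f = (\<lambda>u v. - l (br u v))}"

definition cls :: "('g \<Rightarrow> 'g \<Rightarrow> 'k::field) set \<Rightarrow> ('g \<Rightarrow> 'g \<Rightarrow> 'k) \<Rightarrow> ('g \<Rightarrow> 'g \<Rightarrow> 'k) set" where
  "cls B f = {h. (\<lambda>u v. h u v - f u v) \<in> B}"

definition H2 :: "('k::field \<Rightarrow> 'g::ab_group_add \<Rightarrow> 'g) \<Rightarrow> ('g \<Rightarrow> 'g \<Rightarrow> 'g) \<Rightarrow> ('g \<Rightarrow> 'g \<Rightarrow> 'k) set set" where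
  "H2 s br = cls (B2 s br) ` Z2 s br"

definition hcomb :: "('g \<Rightarrow> 'g \<Rightarrow> 'k::field) set \<Rightarrow> 'k \<Rightarrow> ('g \<Rightarrow> 'g \<Rightarrow> 'k) set
     \<Rightarrow> ('g \<Rightarrow> 'g \<Rightarrow> 'k) set \<Rightarrow> ('g \<Rightarrow> 'g \<Rightarrow> 'k) set" where
  "hcomb B c X Y = cls B (\<lambda>u v. c * (SOME f. f \<in> X) u v + (SOME f. f \<in> Y) u v)"

definition derived :: "('k::field \<Rightarrow> 'b::ab_group_add \<Rightarrow> 'b) \<Rightarrow> ('b \<Rightarrow> 'b \<Rightarrow> 'b) \<Rightarrow> 'b set" where
  "derived sK bk = module.span sK {bk x y | x y. True}"

(* g' = A \<otimes> k', as the subspace of g spanned by the a y with y \<in> k' *)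
definition gprime :: "('k::field \<Rightarrow> 'b::ab_group_add \<Rightarrow> 'b) \<Rightarrow> ('b \<Rightarrow> 'b \<Rightarrow> 'b)
     \<Rightarrow> ('k \<Rightarrow> 'g::ab_group_add \<Rightarrow> 'g) \<Rightarrow> ('a \<Rightarrow> 'b \<Rightarrow> 'g) \<Rightarrow> 'g set" where
  "gprime sK bk sG tm = module.span sG {tm a y | a y. y \<in> derived sK bk}"

(* the quotient map q : g \<rightarrow> g/g', elements of g/g' being cosets *)
definition qmap :: "'g::ab_group_add set \<Rightarrow> 'g \<Rightarrow> 'g set" where
  "qmap P u = {u + v | v. v \<in> P}"

(* Alt^2(g/g')_{1,3}: alternating bilinear forms on g/g' (= range of q), set to 0 outside g/g' *)
definition Alt13 ::
  "('k::field \<Rightarrow> 'b::ab_group_add \<Rightarrow> 'b) \<Rightarrow> ('b \<Rightarrow> 'b \<Rightarrow> 'b) \<Rightarrow> ('k \<Rightarrow> 'g::ab_group_add \<Rightarrow> 'g)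
   \<Rightarrow> ('a::comm_ring_1 \<Rightarrow> 'b \<Rightarrow> 'g) \<Rightarrow> ('g set \<Rightarrow> 'g set \<Rightarrow> 'k) set" where
  "Alt13 sK bk sG tm = (let q = qmap (gprime sK bk sG tm) in
     {\<omega>. (\<forall>X Y. X \<notin> range q \<or> Y \<notin> range q \<longrightarrow> \<omega> X Y = 0) \<and>
         (\<forall>c u u' w. \<omega> (q (sG c u + u')) (q w) = c * \<omega> (q u) (q w) + \<omega> (q u') (q w)) \<and>
         (\<forall>c u u' w. \<omega> (q w) (q (sG c u + u')) = c * \<omega> (q w) (q u) + \<omega> (q w) (q u')) \<and>
         (\<forall>u. \<omega> (q u) (q u) = 0) \<and>
         (\<forall>a x y. \<omega> (q (tm a x)) (q (tm 1 y)) + \<omega> (q (tm 1 x)) (q (tm a y)) = 0)})"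

definition LinAH2 :: "('k::field \<Rightarrow> 'a::ab_group_add \<Rightarrow> 'a) \<Rightarrow> ('k \<Rightarrow> 'b::ab_group_add \<Rightarrow> 'b)
   \<Rightarrow> ('b \<Rightarrow> 'b \<Rightarrow> 'b) \<Rightarrow> ('a \<Rightarrow> ('b \<Rightarrow> 'b \<Rightarrow> 'k) set) set" where
  "LinAH2 sA sK bk = {\<phi>. (\<forall>a. \<phi> a \<in> H2 sK bk) \<and>
     (\<forall>c a a'. \<phi> (sA c a + a') = hcomb (B2 sK bk) c (\<phi> a) (\<phi> a'))}"

definition is_lift :: "('k::field \<Rightarrow> 'a::ab_group_add \<Rightarrow> 'a) \<Rightarrow> ('k \<Rightarrow> 'b::ab_group_add \<Rightarrow> 'b)
   \<Rightarrow> ('b \<Rightarrow> 'b \<Rightarrow> 'b) \<Rightarrow> ('a \<Rightarrow> ('b \<Rightarrow> 'b \<Rightarrow> 'k) set) \<Rightarrow> ('a \<Rightarrow> 'b \<Rightarrow> 'b \<Rightarrow> 'k) \<Rightarrow> bool" where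
  "is_lift sA sK bk \<phi> \<psi> \<longleftrightarrow> (\<forall>a. \<psi> a \<in> Z2 sK bk \<and> \<psi> a \<in> \<phi> a) \<and>
     (\<forall>c a a'. \<psi> (sA c a + a') = (\<lambda>x y. c * \<psi> a x y + \<psi> a' x y))"

definition f_of :: "('k::field \<Rightarrow> 'g::ab_group_add \<Rightarrow> 'g) \<Rightarrow> ('a::comm_ring_1 \<Rightarrow> 'b \<Rightarrow> 'g)
   \<Rightarrow> ('a \<Rightarrow> 'b \<Rightarrow> 'b \<Rightarrow> 'k) \<Rightarrow> ('g \<Rightarrow> 'g \<Rightarrow> 'k)" where
  "f_of sG tm \<psi> = (SOME F. bilin sG sG (*) F \<and> (\<forall>a x b y. F (tm a x) (tm b y) = \<psi> (a * b) x y))"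

definition Phi ::
  "('k::field \<Rightarrow> 'a::comm_ring_1 \<Rightarrow> 'a) \<Rightarrow> ('k \<Rightarrow> 'b::ab_group_add \<Rightarrow> 'b) \<Rightarrow> ('b \<Rightarrow> 'b \<Rightarrow> 'b)
   \<Rightarrow> ('k \<Rightarrow> 'g::ab_group_add \<Rightarrow> 'g) \<Rightarrow> ('g \<Rightarrow> 'g \<Rightarrow> 'g) \<Rightarrow> ('a \<Rightarrow> 'b \<Rightarrow> 'g)
   \<Rightarrow> ('g set \<Rightarrow> 'g set \<Rightarrow> 'k) \<times> ('a \<Rightarrow> ('b \<Rightarrow> 'b \<Rightarrow> 'k) set) \<Rightarrow> ('g \<Rightarrow> 'g \<Rightarrow> 'k) set" where
  "Phi sA sK bk sG bg tm = (\<lambda>(\<omega>, \<phi>). (let q = qmap (gprime sK bk sG tm) in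
     cls (B2 sG bg) (\<lambda>u v. \<omega> (q u) (q v) + f_of sG tm (SOME \<psi>. is_lift sA sK bk \<phi> \<psi>) u v)))"

definition dcomb :: "('k::field \<Rightarrow> 'b::ab_group_add \<Rightarrow> 'b) \<Rightarrow> ('b \<Rightarrow> 'b \<Rightarrow> 'b) \<Rightarrow> 'k
   \<Rightarrow> ('g set \<Rightarrow> 'g set \<Rightarrow> 'k) \<times> ('a \<Rightarrow> ('b \<Rightarrow> 'b \<Rightarrow> 'k) set)
   \<Rightarrow> ('g set \<Rightarrow> 'g set \<Rightarrow> 'k) \<times> ('a \<Rightarrow> ('b \<Rightarrow> 'b \<Rightarrow> 'k) set)
   \<Rightarrow> ('g set \<Rightarrow> 'g set \<Rightarrow> 'k) \<times> ('a \<Rightarrow> ('b \<Rightarrow> 'b \<Rightarrow> 'k) set)" where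
  "dcomb sK bk c p p' = ((\<lambda>X Y. c * fst p X Y + fst p' X Y),
                          (\<lambda>a. hcomb (B2 sK bk) c (snd p a) (snd p' a)))"

(* the three types of alternating forms on g: those of the form f_i \<circ> p_i *)
definition type1 :: "('k::field \<Rightarrow> 'g::ab_group_add \<Rightarrow> 'g) \<Rightarrow> ('a \<Rightarrow> 'b \<Rightarrow> 'g) \<Rightarrow> ('g \<Rightarrow> 'g \<Rightarrow> 'k) \<Rightarrow> bool" where
  "type1 sG tm F \<longleftrightarrow> altform sG F \<and>
     (\<forall>a b x y. F (tm a x) (tm b y) = - F (tm b x) (tm a y) \<and> F (tm a x) (tm b y) = F (tm a y) (tm b x))"

definition type2 :: "('k::field \<Rightarrow> 'a::comm_ring_1 \<Rightarrow> 'a) \<Rightarrow> ('k \<Rightarrow> 'b::ab_group_add \<Rightarrow> 'b)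
   \<Rightarrow> ('k \<Rightarrow> 'g::ab_group_add \<Rightarrow> 'g) \<Rightarrow> ('a \<Rightarrow> 'b \<Rightarrow> 'g) \<Rightarrow> ('g \<Rightarrow> 'g \<Rightarrow> 'k) \<Rightarrow> bool" where
  "type2 sA sK sG tm F \<longleftrightarrow> altform sG F \<and>
     (\<exists>h. (\<forall>a. altform sK (h a)) \<and> (\<forall>x y. Vector_Spaces.linear sA (*) (\<lambda>a. h a x y)) \<and>
          (\<forall>a b x y. F (tm a x) (tm b y) = h (a * b) x y))"

definition type3 :: "('k::field \<Rightarrow> 'a::comm_ring_1 \<Rightarrow> 'a) \<Rightarrow> ('k \<Rightarrow> 'b::ab_group_add \<Rightarrow> 'b)
   \<Rightarrow> ('k \<Rightarrow> 'g::ab_group_add \<Rightarrow> 'g) \<Rightarrow> ('a \<Rightarrow> 'b \<Rightarrow> 'g) \<Rightarrow> ('g \<Rightarrow> 'g \<Rightarrow> 'k) \<Rightarrow> bool" where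
  "type3 sA sK sG tm F \<longleftrightarrow> altform sG F \<and>
     (\<exists>L. (\<forall>a b. altform sK (L a b)) \<and> (\<forall>x y. bilin sA sA (*) (\<lambda>a b. L a b x y)) \<and>
          (\<forall>a b. L a b = L b a) \<and>
          (\<forall>a b x y. F (tm a x) (tm b y) = L a b x y - L (a * b) 1 x y))"

definition comp1 :: "('k::field \<Rightarrow> 'a::comm_ring_1 \<Rightarrow> 'a) \<Rightarrow> ('k \<Rightarrow> 'b::ab_group_add \<Rightarrow> 'b)
   \<Rightarrow> ('k \<Rightarrow> 'g::ab_group_add \<Rightarrow> 'g) \<Rightarrow> ('a \<Rightarrow> 'b \<Rightarrow> 'g) \<Rightarrow> ('g \<Rightarrow> 'g \<Rightarrow> 'k) \<Rightarrow> ('g \<Rightarrow> 'g \<Rightarrow> 'k)" where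
  "comp1 sA sK sG tm f = (THE F1. type1 sG tm F1 \<and>
     (\<exists>F2 F3. type2 sA sK sG tm F2 \<and> type3 sA sK sG tm F3 \<and>
        f = (\<lambda>u v. F1 u v + F2 u v + F3 u v)))"

end

theory Submission imports Defs "HOL-Library.Function_Algebras" begin

lemma vs_k: "vector_space ((*)::'k::field \<Rightarrow> 'k \<Rightarrow> 'k)"
  unfolding vector_space_def by (auto simp: algebra_simps)

lemma linear_k_iff:
  assumes "vector_space s"
  shows "Vector_Spaces.linear s ((*)::'k::field \<Rightarrow> 'k \<Rightarrow> 'k) l \<longleftrightarrow> (\<forall>c u v. l (s c u + v) = c * l u + l v)"
proof -
  interpret vector_space s by fact
  show ?thesis
  proof
    assume "Vector_Spaces.linear s (*) l"
    then show "\<forall>c u v. l (s c u + v) = c * l u + l v" unfolding Vector_Spaces.linear_iff by simp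
  next
    assume h: "\<forall>c u v. l (s c u + v) = c * l u + l v"
    have 0: "l 0 = 0" using h[rule_format, of "-1" 0 0] by simp
    show "Vector_Spaces.linear s (*) l" unfolding Vector_Spaces.linear_iff
      using h[rule_format, of 1] h[rule_format, of _ _ 0] assms vs_k 0 by simp
  qed
qed

lemma linear_gen_iff:
  assumes "vector_space s1" "vector_space s2"
  shows "Vector_Spaces.linear s1 s2 l \<longleftrightarrow> (\<forall>c u v. l (s1 c u + v) = s2 c (l u) + l v)"
proof -
  interpret v1: vector_space s1 by fact
  interpret v2: vector_space s2 by fact
  show ?thesis
  proof
    assume "Vector_Spaces.linear s1 s2 l"
    then show "\<forall>c u v. l (s1 c u + v) = s2 c (l u) + l v" unfolding Vector_Spaces.linear_iff by simp
  next
    assume h: "\<forall>c u v. l (s1 c u + v) = s2 c (l u) + l v"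
    have 0: "l 0 = 0" using h[rule_format, of "-1" 0 0] by simp
    show "Vector_Spaces.linear s1 s2 l" unfolding Vector_Spaces.linear_iff
      using h[rule_format, of 1] h[rule_format, of _ _ 0] assms 0 by simp
  qed
qed

definition sF1 :: "'k::field \<Rightarrow> ('b \<Rightarrow> 'k) \<Rightarrow> ('b \<Rightarrow> 'k)" where
  "sF1 c f = (\<lambda>x. c * f x)"
definition sF2 :: "'k::field \<Rightarrow> ('b \<Rightarrow> 'b \<Rightarrow> 'k) \<Rightarrow> ('b \<Rightarrow> 'b \<Rightarrow> 'k)" where
  "sF2 c f = (\<lambda>x y. c * f x y)"

lemma vs_F1: "vector_space (sF1 :: 'k::field \<Rightarrow> ('b \<Rightarrow> 'k) \<Rightarrow> ('b \<Rightarrow> 'k))"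
  unfolding vector_space_def sF1_def by (auto simp: algebra_simps fun_eq_iff)
lemma vs_F2: "vector_space (sF2 :: 'k::field \<Rightarrow> ('b \<Rightarrow> 'b \<Rightarrow> 'k) \<Rightarrow> ('b \<Rightarrow> 'b \<Rightarrow> 'k))"
  unfolding vector_space_def sF2_def by (auto simp: algebra_simps fun_eq_iff)

lemma select:
  fixes sA :: "'k::field \<Rightarrow> 'a::ab_group_add \<Rightarrow> 'a" and sV :: "'k \<Rightarrow> 'v::ab_group_add \<Rightarrow> 'v"
  assumes vA: "vector_space sA" and vV: "vector_space sV"
    and ex: "\<And>a. \<exists>v. R a v" and R0: "R 0 0"
    and Rc: "\<And>c a a' v v'. R a v \<Longrightarrow> R a' v' \<Longrightarrow> R (sA c a + a') (sV c v + v')"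
  shows "\<exists>\<sigma>. Vector_Spaces.linear sA sV \<sigma> \<and> (\<forall>a. R a (\<sigma> a))"
proof -
  interpret vector_space_pair sA sV using vA vV by (simp add: vector_space_pair_def)
  define B where "B = vs1.extend_basis {}"
  have iB: "vs1.independent B" unfolding B_def by (rule vs1.independent_extend_basis[OF vs1.independent_empty])
  have sB: "vs1.span B = UNIV" unfolding B_def by (rule vs1.span_extend_basis[OF vs1.independent_empty])
  define \<sigma> where "\<sigma> = construct B (\<lambda>e. SOME v. R e v)"
  have lin: "Vector_Spaces.linear sA sV \<sigma>" unfolding \<sigma>_def by (rule linear_construct[OF iB])
  have sl: "\<sigma> (sA c u + v) = sV c (\<sigma> u) + \<sigma> v" for c u v
    using lin linear_gen_iff[OF vA vV] by blast
  have s0: "\<sigma> 0 = 0" using sl[of "-1" 0 0] by simp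
  have "R a (\<sigma> a)" for a
  proof -
    have "a \<in> vs1.span B" using sB by simp
    then show ?thesis
    proof (induct rule: vs1.span_induct_alt)
      case base
      then show ?case using R0 s0 by simp
    next
      case (step c x y)
      have "\<sigma> x = (SOME v. R x v)" unfolding \<sigma>_def using construct_basis[OF iB step(1)] by simp
      then have "R x (\<sigma> x)" using someI_ex[OF ex[of x]] by simp
      then show ?case using Rc[OF _ step(2)] sl by simp
    qed
  qed
  then show ?thesis using lin by blast
qed

definition subsp :: "('g \<Rightarrow> 'g \<Rightarrow> 'k::field) set \<Rightarrow> bool" where
  "subsp B \<longleftrightarrow> (\<lambda>u v. 0) \<in> B \<and> (\<forall>c f g. f \<in> B \<longrightarrow> g \<in> B \<longrightarrow> (\<lambda>u v. c * f u v + g u v) \<in> B)"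

lemma subsp_comb: "subsp B \<Longrightarrow> f \<in> B \<Longrightarrow> g \<in> B \<Longrightarrow> (\<lambda>u v. c * f u v + g u v) \<in> B"
  unfolding subsp_def by blast
lemma subsp_0: "subsp B \<Longrightarrow> (\<lambda>u v. 0) \<in> B"
  unfolding subsp_def by blast
lemma subsp_diff: "subsp B \<Longrightarrow> f \<in> B \<Longrightarrow> g \<in> B \<Longrightarrow> (\<lambda>u v. f u v - g u v) \<in> B"
  using subsp_comb[of B g f "-1"] by simp
lemma subsp_comb2: "subsp B \<Longrightarrow> f \<in> B \<Longrightarrow> g \<in> B \<Longrightarrow> (\<lambda>u v. c * f u v + d * g u v) \<in> B"
proof -
  assume B: "subsp B" and f: "f \<in> B" and g: "g \<in> B"
  have "(\<lambda>u v. d * g u v + 0) \<in> B" using subsp_comb[OF B g subsp_0[OF B]] .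
  then show ?thesis using subsp_comb[OF B f, of "\<lambda>u v. d * g u v"] by simp
qed

lemma cls_self: "subsp B \<Longrightarrow> x \<in> cls B x"
  unfolding cls_def using subsp_0 by simp

lemma cls_eqI: "subsp B \<Longrightarrow> (\<lambda>u v. x u v - y u v) \<in> B \<Longrightarrow> cls B x = cls B y"
proof -
  assume B: "subsp B" and d: "(\<lambda>u v. x u v - y u v) \<in> B"
  have "(\<lambda>u v. h u v - x u v) \<in> B \<longleftrightarrow> (\<lambda>u v. h u v - y u v) \<in> B" for h
  proof
    assume "(\<lambda>u v. h u v - x u v) \<in> B"
    from subsp_comb[OF B this d, of 1] show "(\<lambda>u v. h u v - y u v) \<in> B" by simp
  next
    assume "(\<lambda>u v. h u v - y u v) \<in> B"
    from subsp_diff[OF B this d] show "(\<lambda>u v. h u v - x u v) \<in> B" by simp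
  qed
  then show ?thesis unfolding cls_def by blast
qed

lemma cls_eqD: "subsp B \<Longrightarrow> cls B x = cls B y \<Longrightarrow> (\<lambda>u v. x u v - y u v) \<in> B"
  using cls_self[of B x] unfolding cls_def by blast

lemma in_cls: "h \<in> cls B x \<longleftrightarrow> (\<lambda>u v. h u v - x u v) \<in> B"
  unfolding cls_def by simp

lemma hcomb_cls:
  assumes B: "subsp B"
  shows "hcomb B c (cls B x) (cls B y) = cls B (\<lambda>u v. c * x u v + y u v)"
proof -
  define s where "s = (SOME f. f \<in> cls B x)"
  define t where "t = (SOME f. f \<in> cls B y)"
  have s: "s \<in> cls B x" unfolding s_def by (rule someI[of _ x], rule cls_self[OF B])
  have t: "t \<in> cls B y" unfolding t_def by (rule someI[of _ y], rule cls_self[OF B])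
  have "(\<lambda>u v. (c * s u v + t u v) - (c * x u v + y u v)) \<in> B"
    using subsp_comb[OF B s[unfolded in_cls] t[unfolded in_cls], of c]
    by (simp add: algebra_simps)
  then show ?thesis unfolding hcomb_def s_def[symmetric] t_def[symmetric]
    by (rule cls_eqI[OF B])
qed

lemma B2_subsp:
  assumes "vector_space s"
  shows "subsp (B2 s br)"
proof -
  have "(\<lambda>u v. 0) \<in> B2 s br"
    unfolding B2_def using linear_k_iff[OF assms, of "\<lambda>_. 0"] by (auto intro!: exI[of _ "\<lambda>_. 0"])
  moreover have "(\<lambda>u v. c * f u v + g u v) \<in> B2 s br" if fB: "f \<in> B2 s br" and gB: "g \<in> B2 s br" for c f g
  proof -
    obtain l where l: "Vector_Spaces.linear s (*) l" "f = (\<lambda>u v. - l (br u v))"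
      using fB unfolding B2_def by blast
    obtain l' where l': "Vector_Spaces.linear s (*) l'" "g = (\<lambda>u v. - l' (br u v))"
      using gB unfolding B2_def by blast
    have "Vector_Spaces.linear s (*) (\<lambda>z. c * l z + l' z)"
      using l(1) l'(1) unfolding linear_k_iff[OF assms] by (simp add: algebra_simps)
    then show ?thesis unfolding B2_def l(2) l'(2)
      by (auto intro!: exI[of _ "\<lambda>z. c * l z + l' z"] simp: algebra_simps)
  qed
  ultimately show ?thesis unfolding subsp_def by blast
qed

lemma alt_skew:
  assumes v: "vector_space s" and f: "altform s f"
  shows "f x y = - f y x"
proof -
  have L: "f (s c u + u') w = c * f u w + f u' w" and R: "f w (s c u + u') = c * f w u + f w u'" for c u u' w
    using f unfolding altform_def bilin_def linear_k_iff[OF v] by auto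
  interpret vector_space s by fact
  have "f (x + y) (x + y) = 0" using f unfolding altform_def by simp
  moreover have "f (x + y) (x + y) = f x x + f x y + f y x + f y y"
    using L[of 1 x y] R[of _ 1 x y] by simp
  ultimately show ?thesis using f unfolding altform_def by (simp add: eq_neg_iff_add_eq_0)
qed

lemma Z2_comb:
  assumes v: "vector_space s" and f: "f \<in> Z2 s br" and g: "g \<in> Z2 s br"
  shows "(\<lambda>u v. c * f u v + g u v) \<in> Z2 s br"
proof -
  have "altform s (\<lambda>u v. c * f u v + g u v)"
    using f g unfolding Z2_def altform_def bilin_def linear_k_iff[OF v]
    by (simp add: algebra_simps)
  moreover have "c * f (br u v) w + g (br u v) w + (c * f (br v w) u + g (br v w) u) +
      (c * f (br w u) v + g (br w u) v) = 0" for u v w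
  proof -
    have "f (br u v) w + f (br v w) u + f (br w u) v = 0"
      "g (br u v) w + g (br v w) u + g (br w u) v = 0"
      using f g unfolding Z2_def by auto
    moreover have "c * f (br u v) w + g (br u v) w + (c * f (br v w) u + g (br v w) u) +
      (c * f (br w u) v + g (br w u) v) = c * (f (br u v) w + f (br v w) u + f (br w u) v)
        + (g (br u v) w + g (br v w) u + g (br w u) v)" by (simp add: algebra_simps)
    ultimately show ?thesis by simp
  qed
  ultimately show ?thesis unfolding Z2_def by simp
qed

lemma Z2_0: "vector_space s \<Longrightarrow> (\<lambda>u v. 0) \<in> Z2 s br"
  unfolding Z2_def altform_def bilin_def by (simp add: linear_k_iff)

locale LA =
  fixes sA :: "'k::field \<Rightarrow> 'a::comm_ring_1 \<Rightarrow> 'a"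
    and sK :: "'k \<Rightarrow> 'b::ab_group_add \<Rightarrow> 'b" and bk :: "'b \<Rightarrow> 'b \<Rightarrow> 'b"
    and sG :: "'k \<Rightarrow> 'g::ab_group_add \<Rightarrow> 'g" and bg :: "'g \<Rightarrow> 'g \<Rightarrow> 'g"
    and tm :: "'a \<Rightarrow> 'b \<Rightarrow> 'g"
  assumes two: "(2::'k) \<noteq> 0"
    and A: "comm_algebra sA"
    and K: "lie_algebra sK bk"
    and G: "is_tensor_product sA sK sG tm"
    and bg_bilin: "bilin sG sG sG bg"
    and bg_tm: "\<And>a x b y. bg (tm a x) (tm b y) = tm (a * b) (bk x y)"
begin

lemma vsA: "vector_space sA" using A unfolding comm_algebra_def by simp
lemma vsK: "vector_space sK" using K unfolding lie_algebra_def by simp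
lemma vsG: "vector_space sG" using G unfolding is_tensor_product_def by simp

definition "linG l \<longleftrightarrow> (\<forall>c u v. l (sG c u + v) = c * l u + l v)"
definition "linK l \<longleftrightarrow> (\<forall>c u v. l (sK c u + v) = c * l u + l v)"
definition "linA l \<longleftrightarrow> (\<forall>c u v. l (sA c u + v) = c * l u + l v)"
definition "bilG F \<longleftrightarrow> (\<forall>v. linG (\<lambda>u. F u v)) \<and> (\<forall>u. linG (F u))"

lemma lin_G: "Vector_Spaces.linear sG (*) l \<longleftrightarrow> linG l"
  using linear_k_iff[OF vsG] linG_def by simp
lemma lin_K: "Vector_Spaces.linear sK (*) l \<longleftrightarrow> linK l"
  using linear_k_iff[OF vsK] linK_def by simp
lemma lin_A: "Vector_Spaces.linear sA (*) l \<longleftrightarrow> linA l"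
  using linear_k_iff[OF vsA] linA_def by simp

lemma bilin_G: "bilin sG sG (*) F \<longleftrightarrow> bilG F"
  unfolding bilin_def bilG_def lin_G by auto
lemma bilin_AK: "bilin sA sK (*) F \<longleftrightarrow> (\<forall>x. linA (\<lambda>a. F a x)) \<and> (\<forall>a. linK (F a))"
  unfolding bilin_def lin_K lin_A by auto
lemma bilin_KK: "bilin sK sK (*) F \<longleftrightarrow> (\<forall>x. linK (\<lambda>a. F a x)) \<and> (\<forall>a. linK (F a))"
  unfolding bilin_def lin_K by auto
lemma bilin_AA: "bilin sA sA (*) F \<longleftrightarrow> (\<forall>x. linA (\<lambda>a. F a x)) \<and> (\<forall>a. linA (F a))"
  unfolding bilin_def lin_A by auto

lemma tm_bilin: "bilin sA sK sG tm" using G unfolding is_tensor_product_def by simp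

lemma tmL[simp]: "tm (sA c a + a') x = sG c (tm a x) + tm a' x"
  using tm_bilin unfolding bilin_def linear_gen_iff[OF vsA vsG] by simp
lemma tmR[simp]: "tm a (sK c x + x') = sG c (tm a x) + tm a x'"
  using tm_bilin unfolding bilin_def linear_gen_iff[OF vsK vsG] by simp
lemma bgL[simp]: "bg (sG c u + u') v = sG c (bg u v) + bg u' v"
  using bg_bilin unfolding bilin_def linear_gen_iff[OF vsG vsG] by simp
lemma bgR[simp]: "bg u (sG c v + v') = sG c (bg u v) + bg u v'"
  using bg_bilin unfolding bilin_def linear_gen_iff[OF vsG vsG] by simp
lemma bkL[simp]: "bk (sK c u + u') v = sK c (bk u v) + bk u' v"
  using K unfolding bilin_def lie_algebra_def linear_gen_iff[OF vsK vsK] by simp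
lemma bkR[simp]: "bk u (sK c v + v') = sK c (bk u v) + bk u v'"
  using K unfolding bilin_def lie_algebra_def linear_gen_iff[OF vsK vsK] by simp
lemma bk_alt: "bk x x = 0" using K unfolding lie_algebra_def by simp
lemma jacobi: "bk x (bk y z) + bk y (bk z x) + bk z (bk x y) = 0"
  using K unfolding lie_algebra_def by simp

lemma mulL[simp]: "(sA c a + a') * b = sA c (a * b) + a' * b"
  using A unfolding comm_algebra_def by (simp add: distrib_right)
lemma mulR[simp]: "b * (sA c a + a') = sA c (b * a) + b * a'"
  using mulL by (simp add: mult.commute)

lemma linG_D: "linG l \<Longrightarrow> l (sG c u + v) = c * l u + l v" unfolding linG_def by blast
lemma linK_D: "linK l \<Longrightarrow> l (sK c u + v) = c * l u + l v" unfolding linK_def by blast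
lemma linA_D: "linA l \<Longrightarrow> l (sA c u + v) = c * l u + l v" unfolding linA_def by blast

lemma bilG_L: "bilG F \<Longrightarrow> F (sG c u + u') v = c * F u v + F u' v"
  unfolding bilG_def linG_def by blast
lemma bilG_R: "bilG F \<Longrightarrow> F u (sG c v + v') = c * F u v + F u v'"
  unfolding bilG_def linG_def by blast

lemma linG_comb: "linG f \<Longrightarrow> linG g \<Longrightarrow> linG (\<lambda>u. d * f u + e * g u)"
  unfolding linG_def by (simp add: algebra_simps)
lemma linG_comb1: "linG f \<Longrightarrow> linG g \<Longrightarrow> linG (\<lambda>u. d * f u + g u)"
  unfolding linG_def by (simp add: algebra_simps)
lemma linG_zero: "linG (\<lambda>u. 0)" unfolding linG_def by simp

lemma uniq0:
  assumes l: "linG l" and z: "\<And>a x. l (tm a x) = 0"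
  shows "l u = 0"
proof -
  have b0: "bilin sA sK (*) (\<lambda>a x. 0::'k)"
    unfolding bilin_AK linA_def linK_def by simp
  from G b0 have "\<exists>!l. Vector_Spaces.linear sG (*) l \<and> (\<forall>a x. (0::'k) = l (tm a x))"
    unfolding is_tensor_product_def by blast
  moreover have "Vector_Spaces.linear sG (*) l \<and> (\<forall>a x. (0::'k) = l (tm a x))"
    using l z lin_G by simp
  moreover have "Vector_Spaces.linear sG (*) (\<lambda>u. 0::'k) \<and> (\<forall>a x. (0::'k) = (\<lambda>u. 0) (tm a x))"
    using linG_zero lin_G by simp
  ultimately have "l = (\<lambda>u. 0)" by blast
  then show ?thesis by simp
qed

lemma linG_eq:
  assumes "linG f" "linG g" "\<And>a x. f (tm a x) = g (tm a x)"
  shows "f u = g u"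
proof -
  have "linG (\<lambda>u. 1 * f u + (-1) * g u)" by (rule linG_comb[OF assms(1,2)])
  then have "1 * f u + (-1) * g u = 0" by (rule uniq0) (simp add: assms(3))
  then show ?thesis by simp
qed

lemma extG:
  assumes "bilin sA sK (*) \<beta>"
  shows "\<exists>l. linG l \<and> (\<forall>a x. l (tm a x) = \<beta> a x)"
proof -
  from G assms have "\<exists>!l. Vector_Spaces.linear sG (*) l \<and> (\<forall>a x. \<beta> a x = l (tm a x))"
    unfolding is_tensor_product_def by blast
  then show ?thesis using lin_G by metis
qed

lemma bil_eq:
  assumes F: "bilG F" and F': "bilG F'"
    and e: "\<And>a x b y. F (tm a x) (tm b y) = F' (tm a x) (tm b y)"
  shows "F u v = F' u v"
proof -
  have 1: "F (tm a x) v = F' (tm a x) v" for a x v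
    by (rule linG_eq[of "F (tm a x)" "F' (tm a x)"]) (use F F' e in \<open>auto simp: bilG_def\<close>)
  show ?thesis
    by (rule linG_eq[of "\<lambda>u. F u v" "\<lambda>u. F' u v"]) (use F F' 1 in \<open>auto simp: bilG_def\<close>)
qed

lemma bilG_comb: "bilG F \<Longrightarrow> bilG F' \<Longrightarrow> bilG (\<lambda>u v. d * F u v + e * F' u v)"
  unfolding bilG_def linG_def by (simp add: algebra_simps)

lemma bilG_swap: "bilG F \<Longrightarrow> bilG (\<lambda>u v. d * F v u)"
  unfolding bilG_def linG_def by (simp add: algebra_simps)

lemma skew:
  assumes F: "bilG F" and s: "\<And>a x b y. F (tm a x) (tm b y) = - F (tm b y) (tm a x)"
  shows "F u v = - F v u"
proof -
  have "F u v = (-1) * F v u"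
  proof (rule bil_eq[OF F bilG_swap[OF F]])
    fix a x b y
    show "F (tm a x) (tm b y) = (-1) * F (tm b y) (tm a x)" using s[of a x b y] by simp
  qed
  then show ?thesis by simp
qed

lemma skew_alt:
  assumes F: "bilG F" and s: "\<And>a x b y. F (tm a x) (tm b y) = - F (tm b y) (tm a x)"
  shows "altform sG F"
proof -
  have "F u u = 0" for u
  proof -
    have "F u u = - F u u" by (rule skew[OF F s])
    then have "F u u + F u u = 0" by (metis neg_eq_iff_add_eq_0)
    then have "2 * F u u = 0" by (metis mult_2)
    then show ?thesis using two by simp
  qed
  then show ?thesis using F unfolding altform_def bilin_G by simp
qed

lemma mk2:
  assumes b1: "\<And>b y. bilin sA sK (*) (\<lambda>a x. \<beta> a x b y)"
    and b2: "\<And>a x. bilin sA sK (*) (\<lambda>b y. \<beta> a x b y)"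
  shows "\<exists>F. bilG F \<and> (\<forall>a x b y. F (tm a x) (tm b y) = \<beta> a x b y)"
proof -
  have "\<forall>b y. \<exists>l. linG l \<and> (\<forall>a x. l (tm a x) = \<beta> a x b y)" using extG[OF b1] by blast
  then obtain l where l: "\<And>b y. linG (l b y)" "\<And>a x b y. l b y (tm a x) = \<beta> a x b y"
    by metis
  have lb: "bilin sA sK (*) (\<lambda>b y. l b y u)" for u
  proof -
    have 1: "l (sA c b + b') y u = c * l b y u + l b' y u" for c b b' y
      by (rule linG_eq[of "l (sA c b + b') y" "\<lambda>u. c * l b y u + 1 * l b' y u", simplified])
         (use l b2 linG_comb1[OF l(1) l(1)] in \<open>auto simp: bilin_AK linA_def\<close>)
    have 2: "l b (sK c y + y') u = c * l b y u + l b y' u" for c b y y'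
      by (rule linG_eq[of "l b (sK c y + y')" "\<lambda>u. c * l b y u + 1 * l b y' u", simplified])
         (use l b2 linG_comb1[OF l(1) l(1)] in \<open>auto simp: bilin_AK linK_def\<close>)
    show ?thesis unfolding bilin_AK linA_def linK_def using 1 2 by blast
  qed
  have "\<forall>u. \<exists>m. linG m \<and> (\<forall>b y. m (tm b y) = l b y u)" using extG[OF lb] by blast
  then obtain m where m: "\<And>u. linG (m u)" "\<And>u b y. m u (tm b y) = l b y u"
    by metis
  have mL: "m (sG c u + u') v = c * m u v + m u' v" for c u u' v
    by (rule linG_eq[of "m (sG c u + u')" "\<lambda>v. c * m u v + 1 * m u' v", simplified])
       (use m l linG_comb1[OF m(1) m(1)] in \<open>auto simp: linG_def\<close>)
  have "bilG m" unfolding bilG_def linG_def using mL m(1)[unfolded linG_def] by blast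
  then show ?thesis using m(2) l(2) by metis
qed

end

context LA begin

abbreviation "gp \<equiv> gprime sK bk sG tm"
abbreviation "q \<equiv> qmap gp"
abbreviation "fof \<equiv> f_of sG tm"

lemma modG: "module sG" using vsG module_iff_vector_space by blast
lemma modK: "module sK" using vsK module_iff_vector_space by blast

lemma gp_0: "0 \<in> gp" unfolding gprime_def by (rule module.span_zero[OF modG])
lemma gp_add: "x \<in> gp \<Longrightarrow> y \<in> gp \<Longrightarrow> x + y \<in> gp"
  unfolding gprime_def by (rule module.span_add[OF modG])
lemma gp_diff: "x \<in> gp \<Longrightarrow> y \<in> gp \<Longrightarrow> x - y \<in> gp"
  unfolding gprime_def by (rule module.span_diff[OF modG])
lemma gp_tm: "y \<in> derived sK bk \<Longrightarrow> tm a y \<in> gp"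
  unfolding gprime_def by (rule module.span_base[OF modG]) blast
lemma der_bk: "bk x y \<in> derived sK bk"
  unfolding derived_def by (rule module.span_base[OF modK]) blast
lemma gp_gen: "tm a (bk x y) \<in> gp" by (rule gp_tm[OF der_bk])

lemma q_gp: assumes p: "p \<in> gp" shows "q p = q 0"
proof -
  have "{p + v |v. v \<in> gp} = {0 + v |v. v \<in> gp}"
  proof (intro set_eqI iffI)
    fix z assume "z \<in> {p + v |v. v \<in> gp}"
    then obtain v where "v \<in> gp" "z = p + v" by blast
    then show "z \<in> {0 + v |v. v \<in> gp}" using gp_add[OF p] by auto
  next
    fix z assume "z \<in> {0 + v |v. v \<in> gp}"
    then obtain v where v: "v \<in> gp" "z = 0 + v" by blast
    then have "z = p + (v - p)" by simp
    then show "z \<in> {p + v |v. v \<in> gp}" using gp_diff[OF v(1) p] by blast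
  qed
  then show ?thesis unfolding qmap_def .
qed

lemma q_eq: assumes "q u = q u'" shows "u - u' \<in> gp"
proof -
  have "u \<in> q u" unfolding qmap_def using gp_0 by force
  then have "u \<in> q u'" using assms by simp
  then obtain v where "v \<in> gp" "u = u' + v" unfolding qmap_def by blast
  then show ?thesis by simp
qed

lemma Alt13D:
  assumes "\<omega> \<in> Alt13 sK bk sG tm"
  shows "\<And>X Y. X \<notin> range q \<or> Y \<notin> range q \<Longrightarrow> \<omega> X Y = 0"
    and "\<And>c u u' w. \<omega> (q (sG c u + u')) (q w) = c * \<omega> (q u) (q w) + \<omega> (q u') (q w)"
    and "\<And>c u u' w. \<omega> (q w) (q (sG c u + u')) = c * \<omega> (q w) (q u) + \<omega> (q w) (q u')"
    and "\<And>u. \<omega> (q u) (q u) = 0"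
    and "\<And>a x y. \<omega> (q (tm a x)) (q (tm 1 y)) + \<omega> (q (tm 1 x)) (q (tm a y)) = 0"
  using assms unfolding Alt13_def Let_def by auto

lemma sG10: "sG 1 0 + 0 = 0"
  using vsG by (simp add: vector_space.vector_space_assms(4))

lemma om0:
  assumes om: "\<omega> \<in> Alt13 sK bk sG tm"
  shows "\<omega> (q 0) Y = 0" "\<omega> X (q 0) = 0"
proof -
  show "\<omega> (q 0) Y = 0"
  proof (cases "Y \<in> range q")
    case True
    then obtain w where w: "Y = q w" by blast
    have "\<omega> (q (sG 1 0 + 0)) (q w) = 1 * \<omega> (q 0) (q w) + \<omega> (q 0) (q w)" by (rule Alt13D(2)[OF om])
    then have "\<omega> (q 0) (q w) = \<omega> (q 0) (q w) + \<omega> (q 0) (q w)" by (simp only: sG10 mult_1)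
    then show ?thesis using w by (metis add_cancel_left_right)
  next
    case False
    then show ?thesis using Alt13D(1)[OF om] by blast
  qed
  show "\<omega> X (q 0) = 0"
  proof (cases "X \<in> range q")
    case True
    then obtain w where w: "X = q w" by blast
    have "\<omega> (q w) (q (sG 1 0 + 0)) = 1 * \<omega> (q w) (q 0) + \<omega> (q w) (q 0)" by (rule Alt13D(3)[OF om])
    then have "\<omega> (q w) (q 0) = \<omega> (q w) (q 0) + \<omega> (q w) (q 0)" by (simp only: sG10 mult_1)
    then show ?thesis using w by (metis add_cancel_left_right)
  next
    case False
    then show ?thesis using Alt13D(1)[OF om] by blast
  qed
qed

lemma om_gp:
  assumes om: "\<omega> \<in> Alt13 sK bk sG tm" and p: "p \<in> gp"
  shows "\<omega> (q p) Y = 0" "\<omega> X (q p) = 0"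
  using om0[OF om] q_gp[OF p] by auto

lemma om_bil:
  assumes om: "\<omega> \<in> Alt13 sK bk sG tm"
  shows "bilG (\<lambda>u v. \<omega> (q u) (q v))"
  unfolding bilG_def linG_def using Alt13D(2,3)[OF om] by blast

lemma om_Z2:
  assumes om: "\<omega> \<in> Alt13 sK bk sG tm"
  shows "(\<lambda>u v. \<omega> (q u) (q v)) \<in> Z2 sG bg"
proof -
  have z: "\<omega> (q (bg u v)) (q w) = 0" for u v w
  proof -
    have b: "bilG (\<lambda>u v. \<omega> (q (bg u v)) (q w))"
      unfolding bilG_def linG_def using Alt13D(2)[OF om] by simp
    have b0: "bilG (\<lambda>u v. 0::'k)" unfolding bilG_def linG_def by simp
    show ?thesis
      by (rule bil_eq[OF b b0, simplified]) (simp add: bg_tm om_gp[OF om gp_gen])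
  qed
  show ?thesis unfolding Z2_def altform_def bilin_G
    using om_bil[OF om] Alt13D(4)[OF om] z by simp
qed

lemma fof_gen:
  assumes alt: "\<And>a. altform sK (\<psi> a)"
    and lin: "\<And>c a a'. \<psi> (sA c a + a') = (\<lambda>x y. c * \<psi> a x y + \<psi> a' x y)"
  shows "bilG (fof \<psi>)" "\<And>a x b y. fof \<psi> (tm a x) (tm b y) = \<psi> (a * b) x y"
proof -
  have lk: "linK (\<lambda>x. \<psi> c x y)" "linK (\<psi> c x)" for c x y
    using alt[of c] unfolding altform_def bilin_KK by auto
  have "\<exists>F. bilG F \<and> (\<forall>a x b y. F (tm a x) (tm b y) = \<psi> (a * b) x y)"
  proof (rule mk2)
    show "bilin sA sK (*) (\<lambda>a x. \<psi> (a * b) x y)" for b y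
      unfolding bilin_AK linA_def using lk lin by simp
    show "bilin sA sK (*) (\<lambda>b y. \<psi> (a * b) x y)" for a x
      unfolding bilin_AK linA_def using lk lin by simp
  qed
  then have "bilin sG sG (*) (fof \<psi>) \<and> (\<forall>a x b y. fof \<psi> (tm a x) (tm b y) = \<psi> (a * b) x y)"
    unfolding f_of_def bilin_G by (rule someI_ex)
  then show "bilG (fof \<psi>)" "\<And>a x b y. fof \<psi> (tm a x) (tm b y) = \<psi> (a * b) x y"
    unfolding bilin_G by auto
qed

lemma cocyc:
  assumes F: "bilG F"
    and g: "\<And>a x b y c z. F (bg (tm a x) (tm b y)) (tm c z) + F (bg (tm b y) (tm c z)) (tm a x)
               + F (bg (tm c z) (tm a x)) (tm b y) = 0"
  shows "F (bg u v) w + F (bg v w) u + F (bg w u) v = 0"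
proof -
  note L = bilG_L[OF F] and R = bilG_R[OF F]
  have lin: "linG (\<lambda>w. F (bg u v) w + F (bg v w) u + F (bg w u) v)"
            "linG (\<lambda>v. F (bg u v) w + F (bg v w) u + F (bg w u) v)"
            "linG (\<lambda>u. F (bg u v) w + F (bg v w) u + F (bg w u) v)" for u v w
    by (simp_all add: linG_def L R; simp add: algebra_simps)+
  have 1: "F (bg (tm a x) (tm b y)) w + F (bg (tm b y) w) (tm a x) + F (bg w (tm a x)) (tm b y) = 0" for a x b y w
    by (rule uniq0[OF lin(1)]) (rule g)
  have 2: "F (bg (tm a x) v) w + F (bg v w) (tm a x) + F (bg w (tm a x)) v = 0" for a x v w
    by (rule uniq0[OF lin(2)]) (rule 1)
  show ?thesis
    by (rule uniq0[OF lin(3)]) (rule 2)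
qed

end
context LA begin

abbreviation "Z2k \<equiv> Z2 sK bk"
abbreviation "B2k \<equiv> B2 sK bk"
abbreviation "Z2g \<equiv> Z2 sG bg"
abbreviation "B2g \<equiv> B2 sG bg"

lemma sB2k: "subsp B2k" by (rule B2_subsp[OF vsK])
lemma sB2g: "subsp B2g" by (rule B2_subsp[OF vsG])
lemma modA: "module sA" using vsA module_iff_vector_space by blast
lemma sAm0: "sA (-1) 0 + 0 = 0" by (simp add: module.scale_zero_right[OF modA])

lemma liftD:
  assumes "is_lift sA sK bk \<phi> \<psi>"
  shows "\<psi> a \<in> Z2k" "\<psi> a \<in> \<phi> a" "altform sK (\<psi> a)"
    "\<And>c a a'. \<psi> (sA c a + a') = (\<lambda>x y. c * \<psi> a x y + \<psi> a' x y)"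
  using assms unfolding is_lift_def Z2_def by auto

lemma lift0:
  assumes "is_lift sA sK bk \<phi> \<psi>"
  shows "\<psi> 0 x y = 0"
  using liftD(4)[OF assms, of "-1" 0 0] sAm0 by (metis add.left_inverse mult_minus1)

lemma fof_lift:
  assumes "is_lift sA sK bk \<phi> \<psi>"
  shows "bilG (fof \<psi>)" "fof \<psi> (tm a x) (tm b y) = \<psi> (a * b) x y"
  by (rule fof_gen[OF liftD(3)[OF assms] liftD(4)[OF assms]])+

lemma fof_Z2:
  assumes l: "is_lift sA sK bk \<phi> \<psi>"
  shows "fof \<psi> \<in> Z2g"
proof -
  note b = fof_lift(1)[OF l] and e = fof_lift(2)[OF l]
  have "altform sG (fof \<psi>)"
  proof (rule skew_alt[OF b])
    fix a x b y
    show "fof \<psi> (tm a x) (tm b y) = - fof \<psi> (tm b y) (tm a x)"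
    proof -
      have "b * a = a * b" by (simp add: mult.commute)
      then show ?thesis unfolding e by (simp only:) (rule alt_skew[OF vsK liftD(3)[OF l]])
    qed
  qed
  moreover have "fof \<psi> (bg u v) w + fof \<psi> (bg v w) u + fof \<psi> (bg w u) v = 0" for u v w
  proof (rule cocyc[OF b])
    fix a b c :: 'a and x y z :: 'b
    have m: "b * c * a = a * b * c" "c * a * b = a * b * c" by (simp_all add: ac_simps)
    have "\<psi> (a * b * c) (bk x y) z + \<psi> (a * b * c) (bk y z) x + \<psi> (a * b * c) (bk z x) y = 0"
      using liftD(1)[OF l, of "a * b * c"] unfolding Z2_def by simp
    then show "fof \<psi> (bg (tm a x) (tm b y)) (tm c z) + fof \<psi> (bg (tm b y) (tm c z)) (tm a x)
               + fof \<psi> (bg (tm c z) (tm a x)) (tm b y) = 0"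
      by (simp add: bg_tm e m)
  qed
  ultimately show ?thesis unfolding Z2_def by simp
qed

lemma H2D: "X \<in> H2 s br \<Longrightarrow> \<exists>z. z \<in> Z2 s br \<and> X = cls (B2 s br) z"
  unfolding H2_def by blast

lemma LinAH2D:
  assumes "\<phi> \<in> LinAH2 sA sK bk"
  shows "\<And>a. \<phi> a \<in> H2 sK bk" "\<And>c a a'. \<phi> (sA c a + a') = hcomb B2k c (\<phi> a) (\<phi> a')"
  using assms unfolding LinAH2_def by auto

lemma same_cls:
  assumes "X \<in> H2 sK bk" "v \<in> X" "v' \<in> X"
  shows "(\<lambda>x y. v x y - v' x y) \<in> B2k"
proof -
  obtain z where z: "X = cls B2k z" using H2D[OF assms(1)] by blast
  have "(\<lambda>x y. v x y - z x y) \<in> B2k" "(\<lambda>x y. v' x y - z x y) \<in> B2k"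
    using assms(2,3) unfolding z in_cls by auto
  from subsp_diff[OF sB2k this] show ?thesis by simp
qed

lemma lift_diff:
  assumes \<phi>: "\<phi> \<in> LinAH2 sA sK bk" and l: "is_lift sA sK bk \<phi> \<psi>" and l': "is_lift sA sK bk \<phi> \<psi>'"
  shows "(\<lambda>u v. fof \<psi> u v - fof \<psi>' u v) \<in> B2g"
proof -
  define \<delta> where "\<delta> a = (\<lambda>x y. \<psi> a x y - \<psi>' a x y)" for a
  have \<delta>B: "\<delta> a \<in> B2k" for a
    unfolding \<delta>_def by (rule same_cls[OF LinAH2D(1)[OF \<phi>] liftD(2)[OF l] liftD(2)[OF l']])
  define R where "R a l \<longleftrightarrow> linK l \<and> \<delta> a = (\<lambda>x y. - l (bk x y))" for a and l :: "'b \<Rightarrow> 'k"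
  have "\<exists>\<sigma>. Vector_Spaces.linear sA sF1 \<sigma> \<and> (\<forall>a. R a (\<sigma> a))"
  proof (rule select[OF vsA vs_F1])
    show "\<exists>v. R a v" for a using \<delta>B[of a] unfolding B2_def R_def lin_K by blast
    show "R 0 0" unfolding R_def \<delta>_def linK_def using lift0[OF l] lift0[OF l'] by (simp add: fun_eq_iff)
    show "R (sA c a + a') (sF1 c v + v')" if "R a v" "R a' v'" for c a a' v v'
    proof -
      have d: "\<delta> (sA c a + a') x y = c * \<delta> a x y + \<delta> a' x y" for x y
        unfolding \<delta>_def liftD(4)[OF l] liftD(4)[OF l'] by (simp add: algebra_simps)
      have "linK (sF1 c v + v')" using that unfolding R_def linK_def sF1_def by (simp add: algebra_simps)
      moreover have "\<delta> (sA c a + a') = (\<lambda>x y. - (sF1 c v + v') (bk x y))"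
        using that unfolding R_def sF1_def by (simp add: d fun_eq_iff sF1_def; simp add: algebra_simps)
      ultimately show ?thesis unfolding R_def by simp
    qed
  qed
  then obtain \<sigma> where \<sigma>: "Vector_Spaces.linear sA sF1 \<sigma>" "\<And>a. R a (\<sigma> a)" by blast
  have \<sigma>l: "\<sigma> (sA c a + a') z = c * \<sigma> a z + \<sigma> a' z" for c a a' z
    using \<sigma>(1) unfolding linear_gen_iff[OF vsA vs_F1] sF1_def by (simp add: fun_eq_iff)
  have "bilin sA sK (*) (\<lambda>a z. \<sigma> a z)"
    unfolding bilin_AK linA_def using \<sigma>l \<sigma>(2) unfolding R_def by simp
  from extG[OF this] obtain \<Lambda> where \<Lambda>: "linG \<Lambda>" "\<And>a x. \<Lambda> (tm a x) = \<sigma> a x" by blast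
  have eq: "fof \<psi> u v - fof \<psi>' u v = - \<Lambda> (bg u v)" for u v
  proof (rule bil_eq[of "\<lambda>u v. fof \<psi> u v - fof \<psi>' u v" "\<lambda>u v. - \<Lambda> (bg u v)", simplified])
    show "bilG (\<lambda>u v. fof \<psi> u v - fof \<psi>' u v)"
      using fof_lift(1)[OF l] fof_lift(1)[OF l'] unfolding bilG_def linG_def by (simp add: algebra_simps)
    show "bilG (\<lambda>u v. - \<Lambda> (bg u v))"
      using \<Lambda>(1) unfolding bilG_def linG_def by simp
    fix a x b y
    have "\<delta> (a * b) x y = - \<sigma> (a * b) (bk x y)" using \<sigma>(2)[of "a * b"] unfolding R_def by simp
    then show "fof \<psi> (tm a x) (tm b y) - fof \<psi>' (tm a x) (tm b y) = - \<Lambda> (bg (tm a x) (tm b y))"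
      by (simp add: fof_lift(2)[OF l] fof_lift(2)[OF l'] bg_tm \<Lambda>(2) \<delta>_def)
  qed
  show ?thesis unfolding B2_def lin_G using \<Lambda>(1) eq by (auto intro!: exI[of _ \<Lambda>])
qed

lemma lift_ex:
  assumes \<phi>: "\<phi> \<in> LinAH2 sA sK bk"
  shows "\<exists>\<psi>. is_lift sA sK bk \<phi> \<psi>"
proof -
  obtain z0 where z0: "\<phi> 0 = cls B2k z0" using H2D[OF LinAH2D(1)[OF \<phi>, of 0]] by blast
  have "\<phi> 0 = hcomb B2k (-1) (\<phi> 0) (\<phi> 0)" using LinAH2D(2)[OF \<phi>, of "-1" 0 0] sAm0 by simp
  also have "\<dots> = cls B2k (\<lambda>u v. 0)" unfolding z0 hcomb_cls[OF sB2k] by simp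
  finally have p0: "(\<lambda>u v. 0) \<in> \<phi> 0" using cls_self[OF sB2k] by simp
  define R where "R a v \<longleftrightarrow> v \<in> Z2k \<and> v \<in> \<phi> a" for a and v :: "'b \<Rightarrow> 'b \<Rightarrow> 'k"
  have "\<exists>\<sigma>. Vector_Spaces.linear sA sF2 \<sigma> \<and> (\<forall>a. R a (\<sigma> a))"
  proof (rule select[OF vsA vs_F2])
    show "\<exists>v. R a v" for a
    proof -
      obtain z where "z \<in> Z2k" "\<phi> a = cls B2k z" using H2D[OF LinAH2D(1)[OF \<phi>, of a]] by blast
      then show ?thesis unfolding R_def using cls_self[OF sB2k] by blast
    qed
    have "(0 :: 'b \<Rightarrow> 'b \<Rightarrow> 'k) = (\<lambda>u v. 0)" by (simp add: fun_eq_iff)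
    then show "R 0 0" unfolding R_def using p0 Z2_0[OF vsK] by simp
    show "R (sA c a + a') (sF2 c v + v')" if "R a v" "R a' v'" for c a a' v v'
    proof -
      obtain z where z: "\<phi> a = cls B2k z" using H2D[OF LinAH2D(1)[OF \<phi>, of a]] by blast
      obtain z' where z': "\<phi> a' = cls B2k z'" using H2D[OF LinAH2D(1)[OF \<phi>, of a']] by blast
      have e: "sF2 c v + v' = (\<lambda>x y. c * v x y + v' x y)" by (simp add: sF2_def fun_eq_iff)
      have "(\<lambda>x y. v x y - z x y) \<in> B2k" "(\<lambda>x y. v' x y - z' x y) \<in> B2k"
        using that unfolding R_def z z' in_cls by auto
      from subsp_comb[OF sB2k this, of c]
      have "(\<lambda>x y. (c * v x y + v' x y) - (c * z x y + z' x y)) \<in> B2k" by (simp add: algebra_simps)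
      then have "(\<lambda>x y. c * v x y + v' x y) \<in> \<phi> (sA c a + a')"
        unfolding LinAH2D(2)[OF \<phi>] z z' hcomb_cls[OF sB2k] in_cls .
      moreover have "(\<lambda>x y. c * v x y + v' x y) \<in> Z2k"
        using that unfolding R_def by (simp add: Z2_comb[OF vsK])
      ultimately show ?thesis unfolding R_def e by simp
    qed
  qed
  then obtain \<sigma> where \<sigma>: "Vector_Spaces.linear sA sF2 \<sigma>" "\<And>a. R a (\<sigma> a)" by blast
  have "\<sigma> (sA c a + a') = (\<lambda>x y. c * \<sigma> a x y + \<sigma> a' x y)" for c a a'
    using \<sigma>(1) unfolding linear_gen_iff[OF vsA vs_F2] sF2_def by (simp add: fun_eq_iff)
  then have "is_lift sA sK bk \<phi> \<sigma>" unfolding is_lift_def using \<sigma>(2) unfolding R_def by simp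
  then show ?thesis by blast
qed

end
context LA begin

lemma altG: "altform sG f \<Longrightarrow> bilG f"
  unfolding altform_def bilin_G by simp
lemma altG_skew: "altform sG f \<Longrightarrow> f u v = - f v u"
  by (rule alt_skew[OF vsG])
lemma altG_0: "altform sG f \<Longrightarrow> f u u = 0"
  unfolding altform_def by simp

lemma two_cancel: "(2::'k) * x = 2 * y \<Longrightarrow> x = y"
  using two by simp

lemma half2: "(2::'k) * (inverse 2 * x) = x"
  using two by (simp add: mult.assoc[symmetric])

lemma decomp:
  assumes f: "altform sG f"
  shows "bilG (comp1 sA sK sG tm f)"
    and "2 * comp1 sA sK sG tm f (tm a x) (tm b y) = f (tm a x) (tm b y) + f (tm a y) (tm b x)"
proof -
  note fb = altG[OF f]
  note L = bilG_L[OF fb] and R = bilG_R[OF fb]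
  note fs = altG_skew[OF f]
  define P where "P a x b y = f (tm a x) (tm b y)" for a x b y
  have "\<exists>F. bilG F \<and> (\<forall>a x b y. F (tm a x) (tm b y) = P a x b y + P a y b x)"
    by (rule mk2) (simp add: P_def bilin_AK linA_def linK_def L R; simp add: algebra_simps)+
  then obtain G1 where G1: "bilG G1" "\<And>a x b y. G1 (tm a x) (tm b y) = P a x b y + P a y b x" by blast
  define F1 where "F1 u v = inverse 2 * G1 u v" for u v
  have F1b: "bilG F1" unfolding F1_def using G1(1) unfolding bilG_def linG_def by (simp add: algebra_simps)
  have F1g: "2 * F1 (tm a x) (tm b y) = P a x b y + P a y b x" for a x b y
    unfolding F1_def G1(2) by (rule half2)
  define H where "H c x y = P c x 1 y - P c y 1 x" for c x y
  define h where "h c x y = inverse 2 * H c x y" for c x y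
  have HK1: "linK (\<lambda>x. H c x y)" for c y
    unfolding H_def P_def linK_def by (simp add: L R; simp add: algebra_simps)
  have HK2: "linK (H c x)" for c x
    unfolding H_def P_def linK_def by (simp add: L R; simp add: algebra_simps)
  have hK: "linK (\<lambda>x. h c x y)" "linK (h c x)" for c x y
    using HK1[of c y] HK2[of c x] unfolding h_def linK_def by (simp_all add: algebra_simps)
  have hA: "h (sA c a + a') = (\<lambda>x y. c * h a x y + h a' x y)" for c a a'
  proof -
    have "H (sA c a + a') x y = c * H a x y + H a' x y" for x y
      unfolding H_def P_def by (simp add: L R; simp add: algebra_simps)
    then show ?thesis unfolding h_def by (simp add: fun_eq_iff algebra_simps)
  qed
  have halt: "altform sK (h c)" for c
    unfolding altform_def bilin_KK using hK by (simp add: h_def H_def)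
  have "\<exists>F. bilG F \<and> (\<forall>a x b y. F (tm a x) (tm b y) = h (a * b) x y)"
    by (rule mk2) (simp add: bilin_AK linA_def hA hK)+
  then obtain F2 where F2: "bilG F2" "\<And>a x b y. F2 (tm a x) (tm b y) = h (a * b) x y" by blast
  define Lr where "Lr a b x y = P a x b y - P a y b x" for a b x y
  define LL where "LL a b x y = inverse 2 * Lr a b x y" for a b x y
  have "\<exists>F. bilG F \<and> (\<forall>a x b y. F (tm a x) (tm b y) = Lr a b x y - Lr (a * b) 1 x y)"
    by (rule mk2) (simp add: Lr_def P_def bilin_AK linA_def linK_def L R; simp add: algebra_simps)+
  then obtain G3 where G3: "bilG G3" "\<And>a x b y. G3 (tm a x) (tm b y) = Lr a b x y - Lr (a * b) 1 x y" by blast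
  define F3 where "F3 u v = inverse 2 * G3 u v" for u v
  have F3b: "bilG F3" unfolding F3_def using G3(1) unfolding bilG_def linG_def by (simp add: algebra_simps)
  have F3g: "F3 (tm a x) (tm b y) = LL a b x y - LL (a * b) 1 x y" for a x b y
    unfolding F3_def G3(2) LL_def by (simp add: algebra_simps)
  have t1: "type1 sG tm F1"
  proof -
    have "altform sG F1"
    proof (rule skew_alt[OF F1b])
      fix a b :: 'a and x y :: 'b
      show "F1 (tm a x) (tm b y) = - F1 (tm b y) (tm a x)"
        by (rule two_cancel) (simp add: F1g P_def fs[of "tm b y"] fs[of "tm b x"])
    qed
    moreover have "F1 (tm a x) (tm b y) = - F1 (tm b x) (tm a y)" for a b x y
      by (rule two_cancel) (simp add: F1g P_def fs[of "tm b y"] fs[of "tm b x"])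
    moreover have "F1 (tm a x) (tm b y) = F1 (tm a y) (tm b x)" for a b x y
      by (rule two_cancel) (simp add: F1g)
    ultimately show ?thesis unfolding type1_def by blast
  qed
  have t2: "type2 sA sK sG tm F2"
  proof -
    have "altform sG F2"
    proof (rule skew_alt[OF F2(1)])
      fix a b :: 'a and x y :: 'b
      have "b * a = a * b" by (simp add: mult.commute)
      then show "F2 (tm a x) (tm b y) = - F2 (tm b y) (tm a x)"
        unfolding F2(2) by (simp only:) (rule alt_skew[OF vsK halt])
    qed
    moreover have "\<forall>x y. Vector_Spaces.linear sA (*) (\<lambda>a. h a x y)"
      unfolding lin_A linA_def using hA by simp
    ultimately show ?thesis unfolding type2_def using halt F2(2) by blast
  qed
  have LLs: "LL a b = LL b a" for a b
    unfolding LL_def Lr_def P_def fun_eq_iff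
    using fs[of "tm b x" "tm a y" for x y] fs[of "tm b y" "tm a x" for x y] by (simp add: algebra_simps)
  have Lr1: "linK (\<lambda>x. Lr a b x y)" "linK (Lr a b x)" for a b x y
    unfolding Lr_def P_def linK_def by (simp add: L R; simp add: algebra_simps)+
  have Lr2: "linA (\<lambda>a. Lr a b x y)" "linA (\<lambda>b. Lr a b x y)" for a b x y
    unfolding Lr_def P_def linA_def by (simp add: L R; simp add: algebra_simps)+
  have lKs: "linK g \<Longrightarrow> linK (\<lambda>x. d * g x)" for g and d :: 'k
    unfolding linK_def by (simp add: algebra_simps)
  have lAs: "linA g \<Longrightarrow> linA (\<lambda>x. d * g x)" for g and d :: 'k
    unfolding linA_def by (simp add: algebra_simps)
  have LL1: "linK (\<lambda>x. LL a b x y)" "linK (LL a b x)" for a b x y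
    unfolding LL_def by (rule lKs[OF Lr1(1)], rule lKs[OF Lr1(2)])
  have LL2: "linA (\<lambda>a. LL a b x y)" "linA (\<lambda>b. LL a b x y)" for a b x y
    unfolding LL_def by (rule lAs[OF Lr2(1)], rule lAs[OF Lr2(2)])
  have LLalt: "altform sK (LL a b)" for a b
    unfolding altform_def bilin_KK using LL1 by (simp add: LL_def Lr_def)
  have LLbil: "bilin sA sA (*) (\<lambda>a b. LL a b x y)" for x y
    unfolding bilin_AA using LL2 by simp
  have t3: "type3 sA sK sG tm F3"
  proof -
    have "altform sG F3"
    proof (rule skew_alt[OF F3b])
      fix a b :: 'a and x y :: 'b
      have "b * a = a * b" by (simp add: mult.commute)
      then show "F3 (tm a x) (tm b y) = - F3 (tm b y) (tm a x)"
        unfolding F3g LLs[of b a] \<open>b * a = a * b\<close> by (simp add: alt_skew[OF vsK LLalt, of _ _ y x])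
    qed
    then show ?thesis unfolding type3_def using LLs LLalt LLbil F3g by blast
  qed
  have sum: "f = (\<lambda>u v. F1 u v + F2 u v + F3 u v)"
  proof (intro ext)
    fix u v
    have b: "bilG (\<lambda>u v. F1 u v + F2 u v + F3 u v)"
      using F1b F2(1) F3b unfolding bilG_def linG_def by (simp add: algebra_simps)
    show "f u v = F1 u v + F2 u v + F3 u v"
    proof (rule bil_eq[OF fb b])
      fix a b :: 'a and x y :: 'b
      have "2 * (F1 (tm a x) (tm b y) + F2 (tm a x) (tm b y) + F3 (tm a x) (tm b y))
          = 2 * F1 (tm a x) (tm b y) + 2 * F2 (tm a x) (tm b y) + 2 * F3 (tm a x) (tm b y)"
        by (simp add: algebra_simps)
      also have "\<dots> = (P a x b y + P a y b x) + H (a * b) x y + (Lr a b x y - Lr (a * b) 1 x y)"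
        unfolding F1g F2(2) F3g h_def LL_def using two by (simp add: half2 right_diff_distrib[symmetric])
      also have "\<dots> = 2 * f (tm a x) (tm b y)"
        unfolding H_def Lr_def P_def by (simp only: mult_2) (simp add: algebra_simps)
      finally show "f (tm a x) (tm b y) = F1 (tm a x) (tm b y) + F2 (tm a x) (tm b y) + F3 (tm a x) (tm b y)"
        by (metis two_cancel)
    qed
  qed
  have uniq: "F1' = F1" if t1': "type1 sG tm F1'" and t2': "type2 sA sK sG tm F2'"
    and t3': "type3 sA sK sG tm F3'" and s': "f = (\<lambda>u v. F1' u v + F2' u v + F3' u v)" for F1' F2' F3'
  proof -
    have b1: "bilG F1'" using t1' unfolding type1_def by (simp add: altG)
    obtain h' where h': "\<And>a. altform sK (h' a)" "\<And>a b x y. F2' (tm a x) (tm b y) = h' (a * b) x y"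
      using t2' unfolding type2_def by blast
    obtain L' where L': "\<And>a b. altform sK (L' a b)"
      "\<And>a b x y. F3' (tm a x) (tm b y) = L' a b x y - L' (a * b) 1 x y"
      using t3' unfolding type3_def by blast
    have e1: "F1' (tm a x) (tm b y) = F1' (tm a y) (tm b x)" for a x b y
      using t1' unfolding type1_def by blast
    have "F1' u v = F1 u v" for u v
    proof (rule bil_eq[OF b1 F1b])
      fix a b :: 'a and x y :: 'b
      have z1: "h' (a * b) x y + h' (a * b) y x = 0"
        using alt_skew[OF vsK h'(1), of "a * b" x y] by (simp only: eq_neg_iff_add_eq_0)
      have z2: "L' a b x y + L' a b y x = 0"
        using alt_skew[OF vsK L'(1), of a b x y] by (simp only: eq_neg_iff_add_eq_0)
      have z3: "L' (a * b) 1 x y + L' (a * b) 1 y x = 0"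
        using alt_skew[OF vsK L'(1), of "a * b" 1 x y] by (simp only: eq_neg_iff_add_eq_0)
      have "f (tm a x) (tm b y) + f (tm a y) (tm b x) = 2 * F1' (tm a x) (tm b y)
          + (h' (a * b) x y + h' (a * b) y x) + (L' a b x y + L' a b y x)
          - (L' (a * b) 1 x y + L' (a * b) 1 y x)"
        unfolding s' h'(2) L'(2) e1[of a y b x] by (simp only: mult_2) (simp add: algebra_simps)
      then have "2 * F1' (tm a x) (tm b y) = f (tm a x) (tm b y) + f (tm a y) (tm b x)"
        unfolding z1 z2 z3 by simp
      then show "F1' (tm a x) (tm b y) = F1 (tm a x) (tm b y)"
        using F1g[of a x b y] unfolding P_def by (metis two_cancel)
    qed
    then show ?thesis by (intro ext)
  qed
  have c1: "comp1 sA sK sG tm f = F1"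
    unfolding comp1_def
  proof (rule the_equality)
    show "type1 sG tm F1 \<and> (\<exists>F2 F3. type2 sA sK sG tm F2 \<and> type3 sA sK sG tm F3 \<and>
        f = (\<lambda>u v. F1 u v + F2 u v + F3 u v))" using t1 t2 t3 sum by blast
  next
    fix F1' assume "type1 sG tm F1' \<and> (\<exists>F2 F3. type2 sA sK sG tm F2 \<and> type3 sA sK sG tm F3 \<and>
        f = (\<lambda>u v. F1' u v + F2 u v + F3 u v))"
    then show "F1' = F1" using uniq by blast
  qed
  show "bilG (comp1 sA sK sG tm f)" unfolding c1 by (rule F1b)
  show "2 * comp1 sA sK sG tm f (tm a x) (tm b y) = f (tm a x) (tm b y) + f (tm a y) (tm b x)"
    unfolding c1 F1g P_def ..
qed

end
context LA begin

lemma bilG_diffL: "bilG G \<Longrightarrow> G (u - u') v = G u v - G u' v"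
proof -
  assume G: "bilG G"
  have e: "u - u' = sG (-1) u' + u"
    using module.scale_minus_left[OF modG, of 1 u'] module.scale_one[OF modG, of u'] by simp
  show ?thesis unfolding e by (simp add: bilG_L[OF G])
qed
lemma bilG_diffR: "bilG G \<Longrightarrow> G u (v - v') = G u v - G u v'"
proof -
  assume G: "bilG G"
  have e: "v - v' = sG (-1) v' + v"
    using module.scale_minus_left[OF modG, of 1 v'] module.scale_one[OF modG, of v'] by simp
  show ?thesis unfolding e by (simp add: bilG_R[OF G])
qed

lemma gp_zero:
  assumes l: "linG l" and z: "\<And>a y z. l (tm a (bk y z)) = 0" and v: "v \<in> gp"
  shows "l v = 0"
proof -
  have mh: "module_hom sG (*) l" using l unfolding module_hom_iff_linear lin_G .
  have "l (tm a y) = 0" if y: "y \<in> derived sK bk" for a y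
  proof -
    have "linK (\<lambda>y. l (tm a y))" unfolding linK_def using linG_D[OF l] by simp
    then have mh2: "module_hom sK (*) (\<lambda>y. l (tm a y))" unfolding module_hom_iff_linear lin_K .
    have z1: "\<And>w. w \<in> {bk x y | x y. True} \<Longrightarrow> (\<lambda>y. l (tm a y)) w = 0" using z by blast
    have y1: "y \<in> module.span sK {bk x y | x y. True}" using y unfolding derived_def .
    show ?thesis using module_hom.eq_0_on_span[OF mh2 z1 y1] by simp
  qed
  then have z2: "\<And>w. w \<in> {tm a y | a y. y \<in> derived sK bk} \<Longrightarrow> l w = 0" by blast
  have v1: "v \<in> module.span sG {tm a y | a y. y \<in> derived sK bk}" using v unfolding gprime_def .
  show ?thesis using module_hom.eq_0_on_span[OF mh z2 v1] .
qed

lemma cls_rep: "subsp B \<Longrightarrow> v \<in> cls B z \<Longrightarrow> cls B z = cls B v"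
proof -
  assume B: "subsp B" and v: "v \<in> cls B z"
  have "(\<lambda>x y. v x y - z x y) \<in> B" using v unfolding in_cls .
  from subsp_comb[OF B this subsp_0[OF B], of "-1"]
  have "(\<lambda>x y. z x y - v x y) \<in> B" by simp
  then show ?thesis by (rule cls_eqI[OF B])
qed

lemma lift_cls:
  assumes \<phi>: "\<phi> \<in> LinAH2 sA sK bk" and l: "is_lift sA sK bk \<phi> \<psi>"
  shows "\<phi> a = cls B2k (\<psi> a)"
proof -
  obtain z where z: "\<phi> a = cls B2k z" using H2D[OF LinAH2D(1)[OF \<phi>]] by blast
  show ?thesis using cls_rep[OF sB2k, of "\<psi> a" z] liftD(2)[OF l, of a] z by simp
qed

lemma Phi_eq:
  assumes om: "\<omega> \<in> Alt13 sK bk sG tm" and \<phi>: "\<phi> \<in> LinAH2 sA sK bk" and l: "is_lift sA sK bk \<phi> \<psi>"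
  shows "Phi sA sK bk sG bg tm (\<omega>, \<phi>) = cls B2g (\<lambda>u v. \<omega> (q u) (q v) + fof \<psi> u v)"
proof -
  define \<psi>0 where "\<psi>0 = (SOME \<psi>. is_lift sA sK bk \<phi> \<psi>)"
  have l0: "is_lift sA sK bk \<phi> \<psi>0" unfolding \<psi>0_def by (rule someI_ex[OF lift_ex[OF \<phi>]])
  have "Phi sA sK bk sG bg tm (\<omega>, \<phi>) = cls B2g (\<lambda>u v. \<omega> (q u) (q v) + fof \<psi>0 u v)"
    unfolding Phi_def Let_def \<psi>0_def by simp
  also have "\<dots> = cls B2g (\<lambda>u v. \<omega> (q u) (q v) + fof \<psi> u v)"
    by (rule cls_eqI[OF sB2g]) (use lift_diff[OF \<phi> l0 l] in simp)
  finally show ?thesis .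
qed

lemma WD:
  assumes om: "\<omega> \<in> Alt13 sK bk sG tm" and \<phi>: "\<phi> \<in> LinAH2 sA sK bk"
  shows "(\<exists>\<psi>. is_lift sA sK bk \<phi> \<psi>) \<and>
        (\<lambda>u v. \<omega> (q u) (q v)) \<in> Z2 sG bg \<and>
        (\<forall>\<psi>. is_lift sA sK bk \<phi> \<psi> \<longrightarrow>
           bilin sG sG (*) (f_of sG tm \<psi>) \<and>
           (\<forall>a x b y. f_of sG tm \<psi> (tm a x) (tm b y) = \<psi> (a * b) x y) \<and>
           f_of sG tm \<psi> \<in> Z2 sG bg \<and>
           Phi sA sK bk sG bg tm (\<omega>, \<phi>) = cls (B2 sG bg) (\<lambda>u v. \<omega> (q u) (q v) + f_of sG tm \<psi> u v)) \<and>
        Phi sA sK bk sG bg tm (\<omega>, \<phi>) \<in> H2 sG bg"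
proof -
  have P: "bilin sG sG (*) (f_of sG tm \<psi>) \<and>
           (\<forall>a x b y. f_of sG tm \<psi> (tm a x) (tm b y) = \<psi> (a * b) x y) \<and>
           f_of sG tm \<psi> \<in> Z2 sG bg \<and>
           Phi sA sK bk sG bg tm (\<omega>, \<phi>) = cls (B2 sG bg) (\<lambda>u v. \<omega> (q u) (q v) + f_of sG tm \<psi> u v)"
    if l: "is_lift sA sK bk \<phi> \<psi>" for \<psi>
    using fof_lift[OF l] fof_Z2[OF l] Phi_eq[OF om \<phi> l] unfolding bilin_G by blast
  obtain \<psi> where l: "is_lift sA sK bk \<phi> \<psi>" using lift_ex[OF \<phi>] by blast
  have "(\<lambda>u v. 1 * \<omega> (q u) (q v) + fof \<psi> u v) \<in> Z2g"
    by (rule Z2_comb[OF vsG om_Z2[OF om] fof_Z2[OF l]])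
  then have "Phi sA sK bk sG bg tm (\<omega>, \<phi>) \<in> H2 sG bg"
    unfolding Phi_eq[OF om \<phi> l] H2_def by simp
  then show ?thesis using P om_Z2[OF om] lift_ex[OF \<phi>] by blast
qed

lemma Alt13_comb:
  assumes om: "\<omega> \<in> Alt13 sK bk sG tm" and om': "\<omega>' \<in> Alt13 sK bk sG tm"
  shows "(\<lambda>X Y. c * \<omega> X Y + \<omega>' X Y) \<in> Alt13 sK bk sG tm"
proof -
  note A = Alt13D[OF om] and A' = Alt13D[OF om']
  have 5: "c * \<omega> (q (tm a x)) (q (tm 1 y)) + \<omega>' (q (tm a x)) (q (tm 1 y)) +
      (c * \<omega> (q (tm 1 x)) (q (tm a y)) + \<omega>' (q (tm 1 x)) (q (tm a y))) = 0" for a x y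
  proof -
    have "c * \<omega> (q (tm a x)) (q (tm 1 y)) + \<omega>' (q (tm a x)) (q (tm 1 y)) +
      (c * \<omega> (q (tm 1 x)) (q (tm a y)) + \<omega>' (q (tm 1 x)) (q (tm a y))) =
      c * (\<omega> (q (tm a x)) (q (tm 1 y)) + \<omega> (q (tm 1 x)) (q (tm a y))) +
      (\<omega>' (q (tm a x)) (q (tm 1 y)) + \<omega>' (q (tm 1 x)) (q (tm a y)))" by (simp add: algebra_simps)
    then show ?thesis using A(5) A'(5) by simp
  qed
  show ?thesis unfolding Alt13_def Let_def
    using A(1) A'(1) 5 by (simp add: A(2,3,4) A'(2,3,4); simp add: algebra_simps)
qed

lemma LinAH2_comb:
  assumes \<phi>: "\<phi> \<in> LinAH2 sA sK bk" and \<phi>': "\<phi>' \<in> LinAH2 sA sK bk"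
  shows "(\<lambda>a. hcomb B2k c (\<phi> a) (\<phi>' a)) \<in> LinAH2 sA sK bk"
proof -
  obtain \<psi> where l: "is_lift sA sK bk \<phi> \<psi>" using lift_ex[OF \<phi>] by blast
  obtain \<psi>' where l': "is_lift sA sK bk \<phi>' \<psi>'" using lift_ex[OF \<phi>'] by blast
  have e: "hcomb B2k c (\<phi> a) (\<phi>' a) = cls B2k (\<lambda>x y. c * \<psi> a x y + \<psi>' a x y)" for a
    unfolding lift_cls[OF \<phi> l] lift_cls[OF \<phi>' l'] hcomb_cls[OF sB2k] ..
  have "hcomb B2k c (\<phi> a) (\<phi>' a) \<in> H2 sK bk" for a
    unfolding e H2_def using Z2_comb[OF vsK liftD(1)[OF l] liftD(1)[OF l']] by blast
  moreover have "hcomb B2k c (\<phi> (sA c2 a + a')) (\<phi>' (sA c2 a + a')) =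
      hcomb B2k c2 (hcomb B2k c (\<phi> a) (\<phi>' a)) (hcomb B2k c (\<phi> a') (\<phi>' a'))" for c2 a a'
    unfolding e hcomb_cls[OF sB2k] liftD(4)[OF l] liftD(4)[OF l']
    by (rule arg_cong[where f="cls B2k"]) (simp add: fun_eq_iff algebra_simps)
  ultimately show ?thesis unfolding LinAH2_def by blast
qed

lemma LIN:
  assumes om: "\<omega> \<in> Alt13 sK bk sG tm" and \<phi>: "\<phi> \<in> LinAH2 sA sK bk"
    and om': "\<omega>' \<in> Alt13 sK bk sG tm" and \<phi>': "\<phi>' \<in> LinAH2 sA sK bk"
  shows "Phi sA sK bk sG bg tm (dcomb sK bk c (\<omega>, \<phi>) (\<omega>', \<phi>')) =
      hcomb B2g c (Phi sA sK bk sG bg tm (\<omega>, \<phi>)) (Phi sA sK bk sG bg tm (\<omega>', \<phi>'))"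
proof -
  obtain \<psi> where l: "is_lift sA sK bk \<phi> \<psi>" using lift_ex[OF \<phi>] by blast
  obtain \<psi>' where l': "is_lift sA sK bk \<phi>' \<psi>'" using lift_ex[OF \<phi>'] by blast
  define \<psi>'' where "\<psi>'' a x y = c * \<psi> a x y + \<psi>' a x y" for a x y
  define \<phi>'' where "\<phi>'' a = hcomb B2k c (\<phi> a) (\<phi>' a)" for a
  have d: "dcomb sK bk c (\<omega>, \<phi>) (\<omega>', \<phi>') = ((\<lambda>X Y. c * \<omega> X Y + \<omega>' X Y), \<phi>'')"
    unfolding dcomb_def \<phi>''_def by simp
  have e: "\<phi>'' a = cls B2k (\<psi>'' a)" for a
    unfolding \<phi>''_def \<psi>''_def lift_cls[OF \<phi> l] lift_cls[OF \<phi>' l'] hcomb_cls[OF sB2k] ..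
  have l'': "is_lift sA sK bk \<phi>'' \<psi>''"
    unfolding is_lift_def
  proof (intro conjI allI)
    fix a
    show "\<psi>'' a \<in> Z2k" unfolding \<psi>''_def by (rule Z2_comb[OF vsK liftD(1)[OF l] liftD(1)[OF l']])
    show "\<psi>'' a \<in> \<phi>'' a" unfolding e by (rule cls_self[OF sB2k])
  next
    fix c2 a a'
    show "\<psi>'' (sA c2 a + a') = (\<lambda>x y. c2 * \<psi>'' a x y + \<psi>'' a' x y)"
      unfolding \<psi>''_def liftD(4)[OF l] liftD(4)[OF l'] by (simp add: fun_eq_iff algebra_simps)
  qed
  have f'': "fof \<psi>'' u v = c * fof \<psi> u v + fof \<psi>' u v" for u v
  proof (rule bil_eq[OF fof_lift(1)[OF l''], of "\<lambda>u v. c * fof \<psi> u v + fof \<psi>' u v", simplified])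
    show "bilG (\<lambda>u v. c * fof \<psi> u v + fof \<psi>' u v)"
      using bilG_comb[OF fof_lift(1)[OF l] fof_lift(1)[OF l'], of c 1] by simp
    show "fof \<psi>'' (tm a x) (tm b y) = c * fof \<psi> (tm a x) (tm b y) + fof \<psi>' (tm a x) (tm b y)" for a x b y
      unfolding fof_lift(2)[OF l''] fof_lift(2)[OF l] fof_lift(2)[OF l'] \<psi>''_def ..
  qed
  have "Phi sA sK bk sG bg tm (dcomb sK bk c (\<omega>, \<phi>) (\<omega>', \<phi>')) =
      cls B2g (\<lambda>u v. (c * \<omega> (q u) (q v) + \<omega>' (q u) (q v)) + fof \<psi>'' u v)"
  proof -
    have "\<phi>'' = (\<lambda>a. hcomb B2k c (\<phi> a) (\<phi>' a))" by (rule ext) (rule \<phi>''_def)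
    then have "\<phi>'' \<in> LinAH2 sA sK bk" using LinAH2_comb[OF \<phi> \<phi>'] by simp
    then show ?thesis unfolding d by (rule Phi_eq[OF Alt13_comb[OF om om'] _ l''])
  qed
  also have "\<dots> = hcomb B2g c (Phi sA sK bk sG bg tm (\<omega>, \<phi>)) (Phi sA sK bk sG bg tm (\<omega>', \<phi>'))"
    unfolding Phi_eq[OF om \<phi> l] Phi_eq[OF om' \<phi>' l'] hcomb_cls[OF sB2g] f''
    by (rule arg_cong[where f="cls B2g"]) (simp add: fun_eq_iff algebra_simps)
  finally show ?thesis .
qed

lemma D_comb:
  assumes om: "\<omega> \<in> Alt13 sK bk sG tm" and \<phi>: "\<phi> \<in> LinAH2 sA sK bk"
    and om': "\<omega>' \<in> Alt13 sK bk sG tm" and \<phi>': "\<phi>' \<in> LinAH2 sA sK bk"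
  shows "fst (dcomb sK bk c (\<omega>, \<phi>) (\<omega>', \<phi>')) \<in> Alt13 sK bk sG tm"
    "snd (dcomb sK bk c (\<omega>, \<phi>) (\<omega>', \<phi>')) \<in> LinAH2 sA sK bk"
  using Alt13_comb[OF om om'] LinAH2_comb[OF \<phi> \<phi>'] unfolding dcomb_def by simp_all

end
context LA begin

lemma INJ:
  assumes om: "\<omega> \<in> Alt13 sK bk sG tm" and \<phi>: "\<phi> \<in> LinAH2 sA sK bk"
    and om': "\<omega>' \<in> Alt13 sK bk sG tm" and \<phi>': "\<phi>' \<in> LinAH2 sA sK bk"
    and eq: "Phi sA sK bk sG bg tm (\<omega>, \<phi>) = Phi sA sK bk sG bg tm (\<omega>', \<phi>')"
  shows "\<omega> = \<omega>' \<and> \<phi> = \<phi>'"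
proof -
  obtain \<psi> where l: "is_lift sA sK bk \<phi> \<psi>" using lift_ex[OF \<phi>] by blast
  obtain \<psi>' where l': "is_lift sA sK bk \<phi>' \<psi>'" using lift_ex[OF \<phi>'] by blast
  have "(\<lambda>u v. (\<omega> (q u) (q v) + fof \<psi> u v) - (\<omega>' (q u) (q v) + fof \<psi>' u v)) \<in> B2g"
    by (rule cls_eqD[OF sB2g]) (use eq in \<open>simp add: Phi_eq[OF om \<phi> l] Phi_eq[OF om' \<phi>' l']\<close>)
  then obtain \<Lambda> where \<Lambda>: "linG \<Lambda>"
    and E0: "(\<lambda>u v. (\<omega> (q u) (q v) + fof \<psi> u v) - (\<omega>' (q u) (q v) + fof \<psi>' u v)) = (\<lambda>u v. - \<Lambda> (bg u v))"
    unfolding B2_def lin_G by blast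
  define \<Omega> where "\<Omega> u v = \<omega> (q u) (q v) - \<omega>' (q u) (q v)" for u v
  define \<Psi> where "\<Psi> a x y = \<psi> a x y - \<psi>' a x y" for a x y
  have E: "\<Omega> u v + (fof \<psi> u v - fof \<psi>' u v) = - \<Lambda> (bg u v)" for u v
  proof -
    have "(\<omega> (q u) (q v) + fof \<psi> u v) - (\<omega>' (q u) (q v) + fof \<psi>' u v) = - \<Lambda> (bg u v)"
      using fun_cong[OF fun_cong[OF E0, of u], of v] by simp
    then show ?thesis unfolding \<Omega>_def by (simp add: algebra_simps)
  qed
  have EG: "\<Omega> (tm a x) (tm b y) + \<Psi> (a * b) x y = - \<Lambda> (tm (a * b) (bk x y))" for a x b y
    using E[of "tm a x" "tm b y"] unfolding \<Psi>_def fof_lift(2)[OF l] fof_lift(2)[OF l'] bg_tm .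
  have s5: "\<Omega> (tm a x) (tm 1 y) + \<Omega> (tm 1 x) (tm a y) = 0" for a x y
  proof -
    have "\<Omega> (tm a x) (tm 1 y) + \<Omega> (tm 1 x) (tm a y) =
      (\<omega> (q (tm a x)) (q (tm 1 y)) + \<omega> (q (tm 1 x)) (q (tm a y))) -
      (\<omega>' (q (tm a x)) (q (tm 1 y)) + \<omega>' (q (tm 1 x)) (q (tm a y)))"
      unfolding \<Omega>_def by (simp add: algebra_simps)
    then show ?thesis using Alt13D(5)[OF om] Alt13D(5)[OF om'] by simp
  qed
  have EP: "\<Psi> a x y = - \<Lambda> (tm a (bk x y))" for a x y
  proof -
    have h1: "(\<Omega> (tm a x) (tm 1 y) + \<Psi> a x y) + (\<Omega> (tm 1 x) (tm a y) + \<Psi> a x y)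
        = - \<Lambda> (tm a (bk x y)) + - \<Lambda> (tm a (bk x y))"
      using EG[of a x 1 y] EG[of 1 x a y] by simp
    have "(\<Omega> (tm a x) (tm 1 y) + \<Omega> (tm 1 x) (tm a y)) + (\<Psi> a x y + \<Psi> a x y)
        = (\<Omega> (tm a x) (tm 1 y) + \<Psi> a x y) + (\<Omega> (tm 1 x) (tm a y) + \<Psi> a x y)"
      by (simp add: algebra_simps)
    then have "\<Psi> a x y + \<Psi> a x y = - \<Lambda> (tm a (bk x y)) + - \<Lambda> (tm a (bk x y))"
      unfolding h1 s5 by simp
    then have "2 * \<Psi> a x y = 2 * (- \<Lambda> (tm a (bk x y)))" by (simp only: mult_2)
    then show ?thesis by (rule two_cancel)
  qed
  have \<Omega>b: "bilG \<Omega>"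
    using bilG_comb[OF om_bil[OF om] om_bil[OF om'], of 1 "-1"] unfolding \<Omega>_def by simp
  have \<Omega>0: "\<Omega> u v = 0" for u v
  proof (rule bil_eq[OF \<Omega>b, of "\<lambda>u v. 0", simplified])
    show "bilG (\<lambda>u v. 0::'k)" unfolding bilG_def linG_def by simp
    show "\<Omega> (tm a x) (tm b y) = 0" for a x b y using EG[of a x b y] EP[of "a * b" x y] by simp
  qed
  have "\<omega> = \<omega>'"
  proof (intro ext)
    fix X Y
    show "\<omega> X Y = \<omega>' X Y"
    proof (cases "X \<in> range q \<and> Y \<in> range q")
      case True
      then have X: "X \<in> range q" and Y: "Y \<in> range q" by simp_all
      obtain u where u: "X = q u" using X by (rule rangeE)
      obtain v where v: "Y = q v" using Y by (rule rangeE)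
      have "\<omega> (q u) (q v) - \<omega>' (q u) (q v) = 0" using \<Omega>0[of u v] unfolding \<Omega>_def .
      then show ?thesis unfolding u v by (simp only: right_minus_eq)
    next
      case False
      then have n: "X \<notin> range q \<or> Y \<notin> range q" by simp
      show ?thesis using Alt13D(1)[OF om n] Alt13D(1)[OF om' n] by simp
    qed
  qed
  moreover have "\<phi> = \<phi>'"
  proof (intro ext)
    fix a
    have lk: "linK (\<lambda>z. \<Lambda> (tm a z))" unfolding linK_def using linG_D[OF \<Lambda>] by simp
    have "(\<lambda>x y. \<psi> a x y - \<psi>' a x y) \<in> B2k"
      unfolding B2_def lin_K using lk EP unfolding \<Psi>_def
      by (intro CollectI exI[of _ "\<lambda>z. \<Lambda> (tm a z)"]) (simp add: fun_eq_iff)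
    then show "\<phi> a = \<phi>' a" unfolding lift_cls[OF \<phi> l] lift_cls[OF \<phi>' l'] by (rule cls_eqI[OF sB2k])
  qed
  ultimately show ?thesis by simp
qed

lemma IMG1:
  assumes om: "\<omega> \<in> Alt13 sK bk sG tm" and \<phi>: "\<phi> \<in> LinAH2 sA sK bk"
  shows "\<exists>f. Phi sA sK bk sG bg tm (\<omega>, \<phi>) = cls B2g f \<and> f \<in> Z2g \<and>
      (\<forall>u v. v \<in> gp \<longrightarrow> comp1 sA sK sG tm f u v = 0)"
proof -
  obtain \<psi> where l: "is_lift sA sK bk \<phi> \<psi>" using lift_ex[OF \<phi>] by blast
  define f where "f u v = \<omega> (q u) (q v) + fof \<psi> u v" for u v
  have fZ: "f \<in> Z2g"
    using Z2_comb[OF vsG om_Z2[OF om] fof_Z2[OF l], of 1] unfolding f_def by simp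
  then have fa: "altform sG f" unfolding Z2_def by simp
  note cb = decomp(1)[OF fa] and cg = decomp(2)[OF fa]
  have "comp1 sA sK sG tm f u v = 0" if v: "v \<in> gp" for u v
  proof (rule gp_zero[OF _ _ v])
    show "linG (comp1 sA sK sG tm f u)" using cb unfolding bilG_def by blast
    fix a y z
    show "comp1 sA sK sG tm f u (tm a (bk y z)) = 0"
    proof (rule uniq0[of "\<lambda>u. comp1 sA sK sG tm f u (tm a (bk y z))"])
      show "linG (\<lambda>u. comp1 sA sK sG tm f u (tm a (bk y z)))" using cb unfolding bilG_def by blast
      fix b x
      have "f (tm b x) (tm a (bk y z)) + f (tm b (bk y z)) (tm a x)
          = \<psi> (b * a) x (bk y z) + \<psi> (b * a) (bk y z) x"
        unfolding f_def fof_lift(2)[OF l] using om_gp[OF om gp_gen] by simp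
      also have "\<dots> = 0"
        using alt_skew[OF vsK liftD(3)[OF l], of "b * a" x "bk y z"] by (simp only: eq_neg_iff_add_eq_0)
      finally have "2 * comp1 sA sK sG tm f (tm b x) (tm a (bk y z)) = 2 * 0"
        unfolding cg by simp
      then show "comp1 sA sK sG tm f (tm b x) (tm a (bk y z)) = 0" by (rule two_cancel)
    qed
  qed
  moreover have "Phi sA sK bk sG bg tm (\<omega>, \<phi>) = cls B2g f"
    unfolding Phi_eq[OF om \<phi> l] f_def ..
  ultimately show ?thesis using fZ by blast
qed

end
context LA begin

lemma neg3: "(- a) + (- b) + (- c) = (0::'k) \<Longrightarrow> a + b + c = 0"
proof -
  assume h: "(- a) + (- b) + (- c) = (0::'k)"
  have "a + b + c = - ((- a) + (- b) + (- c))" by (simp add: algebra_simps)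
  then show ?thesis unfolding h by simp
qed

lemma IMG2:
  assumes fZ: "f \<in> Z2g" and C: "\<forall>u v. v \<in> gp \<longrightarrow> comp1 sA sK sG tm f u v = 0"
  shows "\<exists>\<omega> \<phi>. \<omega> \<in> Alt13 sK bk sG tm \<and> \<phi> \<in> LinAH2 sA sK bk \<and>
      Phi sA sK bk sG bg tm (\<omega>, \<phi>) = cls B2g f"
proof -
  have fa: "altform sG f" using fZ unfolding Z2_def by simp
  note fb = altG[OF fa]
  note L = bilG_L[OF fb] and R = bilG_R[OF fb]
  have fcyc: "f (bg u v) w + f (bg v w) u + f (bg w u) v = 0" for u v w
    using fZ unfolding Z2_def by simp
  define P where "P a x b y = f (tm a x) (tm b y)" for a x b y
  have sk: "P a x b y = - P b y a x" for a x b y unfolding P_def by (rule altG_skew[OF fa])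
  have C1: "P a x b (bk y z) + P a (bk y z) b x = 0" for a x b y z
  proof -
    have "2 * comp1 sA sK sG tm f (tm a x) (tm b (bk y z)) = P a x b (bk y z) + P a (bk y z) b x"
      unfolding P_def by (rule decomp(2)[OF fa])
    moreover have "comp1 sA sK sG tm f (tm a x) (tm b (bk y z)) = 0" using C gp_gen by blast
    ultimately show ?thesis by simp
  qed
  have cyc: "P (a * b) (bk x y) c z + P (b * c) (bk y z) a x + P (c * a) (bk z x) b y = 0" for a b c x y z
    using fcyc[of "tm a x" "tm b y" "tm c z"] unfolding P_def bg_tm .
  define r where "r a b x y z = P a x b (bk y z)" for a b x y z
  have C1': "P a (bk y z) b x = - r a b x y z" for a b x y z
  proof -
    have "P a x b (bk y z) + P a (bk y z) b x = 0" by (rule C1)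
    then show ?thesis unfolding r_def by (simp only: eq_neg_iff_add_eq_0 add.commute)
  qed
  have rsym: "r b a x y z = r a b x y z" for a b x y z
  proof -
    have "- P b x a (bk y z) = - r a b x y z"
      using sk[of a "bk y z" b x] C1'[of a y z b x] by simp
    then show ?thesis unfolding r_def by simp
  qed
  have E1: "r a c z x y + r a c x y z + r (a * c) 1 y z x = 0" for a c x y z
  proof -
    have m: "c * a = a * c" by (rule mult.commute)
    have "P a (bk x y) c z + P c (bk y z) a x + P (a * c) (bk z x) 1 y = 0"
      using cyc[of a 1 x y c z] unfolding m by simp
    then have "(- r a c z x y) + (- r a c x y z) + (- r (a * c) 1 y z x) = 0"
      unfolding C1' rsym[of c a] .
    then show ?thesis by (rule neg3)
  qed
  have E2: "r c 1 z x y + r c 1 x y z + r c 1 y z x = 0" for c x y z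
  proof -
    have "P 1 (bk x y) c z + P c (bk y z) 1 x + P c (bk z x) 1 y = 0"
      using cyc[of 1 1 x y c z] by simp
    then have "(- r c 1 z x y) + (- r c 1 x y z) + (- r c 1 y z x) = 0"
      unfolding C1' rsym[of 1 c] .
    then show ?thesis by (rule neg3)
  qed
  have rho: "r a c x y z = r (a * c) 1 x y z" for a c x y z
  proof -
    define \<mu> where "\<mu> x y z = r a c x y z - r (a * c) 1 x y z" for x y z
    have M: "\<mu> z x y + \<mu> x y z = 0" for x y z
    proof -
      have "\<mu> z x y + \<mu> x y z = (r a c z x y + r a c x y z + r (a * c) 1 y z x)
          - (r (a * c) 1 z x y + r (a * c) 1 x y z + r (a * c) 1 y z x)"
        unfolding \<mu>_def by (simp add: algebra_simps)
      then show ?thesis unfolding E1 E2 by simp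
    qed
    have "2 * \<mu> x y z = (\<mu> z x y + \<mu> x y z) + (\<mu> x y z + \<mu> y z x) - (\<mu> y z x + \<mu> z x y)"
      by (simp only: mult_2) (simp add: algebra_simps)
    then have "2 * \<mu> x y z = 2 * 0" unfolding M by simp
    then have "\<mu> x y z = 0" by (rule two_cancel)
    then show ?thesis unfolding \<mu>_def by simp
  qed
  define H where "H c x y = P c x 1 y - P c y 1 x" for c x y
  define h where "h c x y = inverse 2 * H c x y" for c x y
  have HK1: "linK (\<lambda>x. H c x y)" for c y
    unfolding H_def P_def linK_def by (simp add: L R; simp add: algebra_simps)
  have HK2: "linK (H c x)" for c x
    unfolding H_def P_def linK_def by (simp add: L R; simp add: algebra_simps)
  have hK: "linK (\<lambda>x. h c x y)" "linK (h c x)" for c x y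
    using HK1[of c y] HK2[of c x] unfolding h_def linK_def by (simp_all add: algebra_simps)
  have hA: "h (sA c a + a') = (\<lambda>x y. c * h a x y + h a' x y)" for c a a'
  proof -
    have "H (sA c a + a') x y = c * H a x y + H a' x y" for x y
      unfolding H_def P_def by (simp add: L R; simp add: algebra_simps)
    then show ?thesis unfolding h_def by (simp add: fun_eq_iff algebra_simps)
  qed
  have halt: "altform sK (h c)" for c
  proof -
    have "bilin sK sK (*) (h c)" unfolding bilin_KK using hK by blast
    moreover have "h c x x = 0" for x unfolding h_def H_def by simp
    ultimately show ?thesis unfolding altform_def by blast
  qed
  have hZ: "h c \<in> Z2k" for c
  proof -
    have Hb: "H c (bk x y) z = - r c 1 z x y - r c 1 z x y" for x y z
      unfolding H_def C1'[of c x y 1 z] using r_def[of c 1 z x y] by simp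
    have "H c (bk x y) z + H c (bk y z) x + H c (bk z x) y =
        - (r c 1 z x y + r c 1 x y z + r c 1 y z x) - (r c 1 z x y + r c 1 x y z + r c 1 y z x)" for x y z
      unfolding Hb by (simp add: algebra_simps)
    then have "H c (bk x y) z + H c (bk y z) x + H c (bk z x) y = 0" for x y z unfolding E2 by simp
    then have "h c (bk x y) z + h c (bk y z) x + h c (bk z x) y = 0" for x y z
      unfolding h_def by (metis distrib_left mult_zero_right)
    then show ?thesis unfolding Z2_def using halt by simp
  qed
  note F2b = fof_gen(1)[OF halt hA] and F2g = fof_gen(2)[OF halt hA]
  define G where "G u v = f u v - fof h u v" for u v
  have Gb: "bilG G" unfolding G_def using bilG_comb[OF fb F2b, of 1 "-1"] by simp
  have F2s: "fof h u v = - fof h v u" for u v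
  proof (rule skew[OF F2b])
    fix a b :: 'a and x y :: 'b
    have "b * a = a * b" by (simp add: mult.commute)
    then show "fof h (tm a x) (tm b y) = - fof h (tm b y) (tm a x)"
      unfolding F2g by (simp only:) (rule alt_skew[OF vsK halt])
  qed
  have Gs: "G u v = - G v u" for u v
    unfolding G_def using altG_skew[OF fa, of u v] F2s[of u v] by simp
  have G0: "G u u = 0" for u
    unfolding G_def using altG_0[OF fa] F2s[of u u] two by simp
  have Gz: "G u v = 0" if v: "v \<in> gp" for u v
  proof (rule gp_zero[OF _ _ v])
    show "linG (G u)" using Gb unfolding bilG_def by blast
    fix b y z
    show "G u (tm b (bk y z)) = 0"
    proof (rule uniq0[of "\<lambda>u. G u (tm b (bk y z))"])
      show "linG (\<lambda>u. G u (tm b (bk y z)))" using Gb unfolding bilG_def by blast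
      fix a x
      have "2 * h (a * b) x (bk y z) = H (a * b) x (bk y z)" unfolding h_def by (rule half2)
      also have "\<dots> = 2 * r a b x y z"
      proof -
        have p1: "P (a * b) x 1 (bk y z) = r a b x y z" using rho[of a b x y z] unfolding r_def by simp
        have p2: "P (a * b) (bk y z) 1 x = - r a b x y z"
          using C1'[of "a * b" y z 1 x] rho[of a b x y z] by simp
        show ?thesis unfolding H_def p1 p2 by (simp only: mult_2 diff_minus_eq_add)
      qed
      finally have "h (a * b) x (bk y z) = r a b x y z" by (rule two_cancel)
      then show "G (tm a x) (tm b (bk y z)) = 0" unfolding G_def F2g r_def P_def by simp
    qed
  qed
  have Gz': "G u v = 0" if u: "u \<in> gp" for u v
    using Gs[of u v] Gz[OF u, of v] by simp
  have Gq: "G u v = G u' v'" if "q u = q u'" "q v = q v'" for u u' v v'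
  proof -
    have "G u v - G u' v = 0" using bilG_diffL[OF Gb, of u u' v] Gz'[OF q_eq[OF that(1)]] by simp
    moreover have "G u' v - G u' v' = 0" using bilG_diffR[OF Gb, of u' v v'] Gz[OF q_eq[OF that(2)]] by simp
    ultimately show ?thesis by simp
  qed
  define \<omega> where "\<omega> X Y = (if X \<in> range q \<and> Y \<in> range q then G (SOME u. q u = X) (SOME v. q v = Y) else 0)"
    for X Y
  have omq: "\<omega> (q u) (q v) = G u v" for u v
  proof -
    have 1: "q (SOME u'. q u' = q u) = q u" by (rule someI[of _ u]) simp
    have 2: "q (SOME v'. q v' = q v) = q v" by (rule someI[of _ v]) simp
    show ?thesis unfolding \<omega>_def using Gq[OF 1 2] by simp
  qed
  have omA: "\<omega> \<in> Alt13 sK bk sG tm"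
  proof -
    have 5: "G (tm a x) (tm 1 y) + G (tm 1 x) (tm a y) = 0" for a x y
    proof -
      have g1: "G (tm a x) (tm 1 y) = P a x 1 y - h a x y" unfolding G_def F2g P_def by simp
      have g2: "G (tm 1 x) (tm a y) = - P a y 1 x - h a x y"
        unfolding G_def F2g using sk[of 1 x a y] unfolding P_def by simp
      have hh: "h a x y + h a x y = H a x y" using half2[of "H a x y"] unfolding h_def by (simp only: mult_2)
      have "G (tm a x) (tm 1 y) + G (tm 1 x) (tm a y) = H a x y - (h a x y + h a x y)"
        unfolding g1 g2 H_def by (simp add: algebra_simps)
      then show ?thesis unfolding hh by simp
    qed
    show ?thesis unfolding Alt13_def Let_def
      using bilG_L[OF Gb] bilG_R[OF Gb] G0 5 by (simp add: omq) (simp add: \<omega>_def)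
  qed
  define \<phi> where "\<phi> a = cls B2k (h a)" for a
  have \<phi>A: "\<phi> \<in> LinAH2 sA sK bk"
    unfolding LinAH2_def \<phi>_def H2_def using hZ
    by (simp add: hcomb_cls[OF sB2k] hA)
  have l: "is_lift sA sK bk \<phi> h"
    unfolding is_lift_def \<phi>_def using hZ cls_self[OF sB2k] hA by simp
  have "Phi sA sK bk sG bg tm (\<omega>, \<phi>) = cls B2g (\<lambda>u v. \<omega> (q u) (q v) + fof h u v)"
    by (rule Phi_eq[OF omA \<phi>A l])
  also have "(\<lambda>u v. \<omega> (q u) (q v) + fof h u v) = f"
    unfolding omq G_def by (simp add: fun_eq_iff)
  finally show ?thesis using omA \<phi>A by blast
qed

end
theorem lemma4p1:
  fixes sA :: "'k::field \<Rightarrow> 'a::comm_ring_1 \<Rightarrow> 'a"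
    and sK :: "'k \<Rightarrow> 'b::ab_group_add \<Rightarrow> 'b" and bk :: "'b \<Rightarrow> 'b \<Rightarrow> 'b"
    and sG :: "'k \<Rightarrow> 'g::ab_group_add \<Rightarrow> 'g" and bg :: "'g \<Rightarrow> 'g \<Rightarrow> 'g"
    and tm :: "'a \<Rightarrow> 'b \<Rightarrow> 'g"
  assumes two: "(2::'k) \<noteq> 0"
    and A: "comm_algebra sA"
    and K: "lie_algebra sK bk"
    and G: "is_tensor_product sA sK sG tm"
    and bg_bilin: "bilin sG sG sG bg"
    and bg_tm: "\<And>a x b y. bg (tm a x) (tm b y) = tm (a * b) (bk x y)"
  defines "D \<equiv> {(\<omega>, \<phi>). \<omega> \<in> Alt13 sK bk sG tm \<and> \<phi> \<in> LinAH2 sA sK bk}"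
    and "q \<equiv> qmap (gprime sK bk sG tm)"
    and "\<Phi> \<equiv> Phi sA sK bk sG bg tm"
  shows
    \<comment> \<open>well-defined\<close>
    "(\<forall>\<omega> \<phi>. (\<omega>, \<phi>) \<in> D \<longrightarrow>
        (\<exists>\<psi>. is_lift sA sK bk \<phi> \<psi>) \<and>
        (\<lambda>u v. \<omega> (q u) (q v)) \<in> Z2 sG bg \<and>
        (\<forall>\<psi>. is_lift sA sK bk \<phi> \<psi> \<longrightarrow>
           bilin sG sG (*) (f_of sG tm \<psi>) \<and>
           (\<forall>a x b y. f_of sG tm \<psi> (tm a x) (tm b y) = \<psi> (a * b) x y) \<and>
           f_of sG tm \<psi> \<in> Z2 sG bg \<and>
           \<Phi> (\<omega>, \<phi>) = cls (B2 sG bg) (\<lambda>u v. \<omega> (q u) (q v) + f_of sG tm \<psi> u v)) \<and>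
        \<Phi> (\<omega>, \<phi>) \<in> H2 sG bg)
     \<comment> \<open>linear\<close>
     \<and> (\<forall>c p p'. p \<in> D \<longrightarrow> p' \<in> D \<longrightarrow>
          dcomb sK bk c p p' \<in> D \<and>
          \<Phi> (dcomb sK bk c p p') = hcomb (B2 sG bg) c (\<Phi> p) (\<Phi> p'))
     \<comment> \<open>injective\<close>
     \<and> inj_on \<Phi> D
     \<comment> \<open>image\<close>
     \<and> \<Phi> ` D = {cls (B2 sG bg) f | f. f \<in> Z2 sG bg \<and>
                   (\<forall>u v. v \<in> gprime sK bk sG tm \<longrightarrow> comp1 sA sK sG tm f u v = 0)}"
proof -
  interpret LA sA sK bk sG bg tm
    by (rule LA.intro) (fact two, fact A, fact K, fact G, fact bg_bilin, fact bg_tm)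
  have Dm: "p \<in> D \<longleftrightarrow> fst p \<in> Alt13 sK bk sG tm \<and> snd p \<in> LinAH2 sA sK bk" for p
    unfolding D_def by (cases p) simp
  have P1: "\<forall>\<omega> \<phi>. (\<omega>, \<phi>) \<in> D \<longrightarrow>
        (\<exists>\<psi>. is_lift sA sK bk \<phi> \<psi>) \<and>
        (\<lambda>u v. \<omega> (q u) (q v)) \<in> Z2 sG bg \<and>
        (\<forall>\<psi>. is_lift sA sK bk \<phi> \<psi> \<longrightarrow>
           bilin sG sG (*) (f_of sG tm \<psi>) \<and>
           (\<forall>a x b y. f_of sG tm \<psi> (tm a x) (tm b y) = \<psi> (a * b) x y) \<and>
           f_of sG tm \<psi> \<in> Z2 sG bg \<and>
           \<Phi> (\<omega>, \<phi>) = cls (B2 sG bg) (\<lambda>u v. \<omega> (q u) (q v) + f_of sG tm \<psi> u v)) \<and>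
        \<Phi> (\<omega>, \<phi>) \<in> H2 sG bg"
  proof (intro allI impI)
    fix \<omega> \<phi> assume "(\<omega>, \<phi>) \<in> D"
    then have om: "\<omega> \<in> Alt13 sK bk sG tm" and ph: "\<phi> \<in> LinAH2 sA sK bk" using Dm by auto
    show "(\<exists>\<psi>. is_lift sA sK bk \<phi> \<psi>) \<and>
        (\<lambda>u v. \<omega> (q u) (q v)) \<in> Z2 sG bg \<and>
        (\<forall>\<psi>. is_lift sA sK bk \<phi> \<psi> \<longrightarrow>
           bilin sG sG (*) (f_of sG tm \<psi>) \<and>
           (\<forall>a x b y. f_of sG tm \<psi> (tm a x) (tm b y) = \<psi> (a * b) x y) \<and>
           f_of sG tm \<psi> \<in> Z2 sG bg \<and>
           \<Phi> (\<omega>, \<phi>) = cls (B2 sG bg) (\<lambda>u v. \<omega> (q u) (q v) + f_of sG tm \<psi> u v)) \<and>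
        \<Phi> (\<omega>, \<phi>) \<in> H2 sG bg"
      unfolding q_def \<Phi>_def by (rule WD[OF om ph])
  qed
  have P2: "\<forall>c p p'. p \<in> D \<longrightarrow> p' \<in> D \<longrightarrow>
          dcomb sK bk c p p' \<in> D \<and>
          \<Phi> (dcomb sK bk c p p') = hcomb (B2 sG bg) c (\<Phi> p) (\<Phi> p')"
  proof (intro allI impI)
    fix c p p' assume p: "p \<in> D" and p': "p' \<in> D"
    obtain \<omega> \<phi> where pe: "p = (\<omega>, \<phi>)" by (cases p)
    obtain \<omega>' \<phi>' where pe': "p' = (\<omega>', \<phi>')" by (cases p')
    have om: "\<omega> \<in> Alt13 sK bk sG tm" and ph: "\<phi> \<in> LinAH2 sA sK bk"
      using p Dm pe by auto
    have om': "\<omega>' \<in> Alt13 sK bk sG tm" and ph': "\<phi>' \<in> LinAH2 sA sK bk"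
      using p' Dm pe' by auto
    show "dcomb sK bk c p p' \<in> D \<and> \<Phi> (dcomb sK bk c p p') = hcomb (B2 sG bg) c (\<Phi> p) (\<Phi> p')"
      unfolding pe pe' \<Phi>_def Dm using D_comb[OF om ph om' ph'] LIN[OF om ph om' ph'] by simp
  qed
  have P3: "inj_on \<Phi> D"
  proof (rule inj_onI)
    fix p p' assume p: "p \<in> D" and p': "p' \<in> D" and e: "\<Phi> p = \<Phi> p'"
    obtain \<omega> \<phi> where pe: "p = (\<omega>, \<phi>)" by (cases p)
    obtain \<omega>' \<phi>' where pe': "p' = (\<omega>', \<phi>')" by (cases p')
    have om: "\<omega> \<in> Alt13 sK bk sG tm" and ph: "\<phi> \<in> LinAH2 sA sK bk"
      using p Dm pe by auto
    have om': "\<omega>' \<in> Alt13 sK bk sG tm" and ph': "\<phi>' \<in> LinAH2 sA sK bk"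
      using p' Dm pe' by auto
    have "\<omega> = \<omega>' \<and> \<phi> = \<phi>'" using INJ[OF om ph om' ph'] e unfolding pe pe' \<Phi>_def by simp
    then show "p = p'" unfolding pe pe' by simp
  qed
  have P4: "\<Phi> ` D = {cls (B2 sG bg) f | f. f \<in> Z2 sG bg \<and>
                   (\<forall>u v. v \<in> gprime sK bk sG tm \<longrightarrow> comp1 sA sK sG tm f u v = 0)}"
  proof (intro set_eqI iffI)
    fix X assume "X \<in> \<Phi> ` D"
    then obtain p where p: "p \<in> D" and X: "X = \<Phi> p" by blast
    obtain \<omega> \<phi> where pe: "p = (\<omega>, \<phi>)" by (cases p)
    have om: "\<omega> \<in> Alt13 sK bk sG tm" and ph: "\<phi> \<in> LinAH2 sA sK bk"
      using p Dm pe by auto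
    obtain f where "Phi sA sK bk sG bg tm (\<omega>, \<phi>) = cls B2g f" "f \<in> Z2g"
      "\<forall>u v. v \<in> gprime sK bk sG tm \<longrightarrow> comp1 sA sK sG tm f u v = 0"
      using IMG1[OF om ph] by blast
    then show "X \<in> {cls (B2 sG bg) f | f. f \<in> Z2 sG bg \<and>
                   (\<forall>u v. v \<in> gprime sK bk sG tm \<longrightarrow> comp1 sA sK sG tm f u v = 0)}"
      unfolding X pe \<Phi>_def by blast
  next
    fix X assume "X \<in> {cls (B2 sG bg) f | f. f \<in> Z2 sG bg \<and>
                   (\<forall>u v. v \<in> gprime sK bk sG tm \<longrightarrow> comp1 sA sK sG tm f u v = 0)}"
    then obtain f where X: "X = cls B2g f" and fZ: "f \<in> Z2g"
      and C: "\<forall>u v. v \<in> gprime sK bk sG tm \<longrightarrow> comp1 sA sK sG tm f u v = 0" by blast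
    obtain \<omega> \<phi> where om: "\<omega> \<in> Alt13 sK bk sG tm" and ph: "\<phi> \<in> LinAH2 sA sK bk"
      and e: "Phi sA sK bk sG bg tm (\<omega>, \<phi>) = cls B2g f"
      using IMG2[OF fZ C] by blast
    have "(\<omega>, \<phi>) \<in> D" using Dm om ph by simp
    moreover have "X = \<Phi> (\<omega>, \<phi>)" unfolding X \<Phi>_def e ..
    ultimately show "X \<in> \<Phi> ` D" by blast
  qed
  show ?thesis using P1 P2 P3 P4 by blast
qed

end
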